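(* Suppose Assumptions (NC) and (B) hold. Let $\mathbb H\subseteq L_2(W,A,X)$ and a class $\mathbb Q$ with $\pi\mathbb Q\subseteq L_2(Z,A,X)$ satisfy realizability: $\mathbb H_0^{\mathrm{obs}}\cap\mathbb H\ne\emptyset$ and $\mathbb Q_0^{\mathrm{obs}}\cap\mathbb Q\ne\emptyset$. Let $\mathbb Q'\subseteq L_2(Z,A,X)$ and $\mathbb H'\subseteq L_2(W,A,X)$ satisfy closedness: $P_z(\mathbb H-\mathbb H_0^{\mathrm{obs}})\subseteq\mathbb Q'$ and $\pi P_w(\mathbb Q-\mathbb Q_0^{\mathrm{obs}})\subseteq\mathbb H'$. Then $$\mathbb H_0^{\mathrm{obs}}\cap\mathbb H=\operatorname*{argmin}_{h\in\mathbb H}\sup_{q\in\mathbb Q'}\big(\mathbb E[q(Z,A,X)(h(W,A,X)-Y)]\big)^2,$$ $$\mathbb Q_0^{\mathrm{obs}}\cap\mathbb Q=\operatorname*{argmin}_{q\in\mathbb Q}\sup_{h\in\mathbb H'}\big(\mathbb E[\pi(A\mid X)q(Z,A,X)h(W,A,X)-(\mathcal T h)(W,X)]\big)^2.$$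
   Context: Setup: random variables $(U,X,A,Z,W,Y)$ with $X$ observed covariates, $A\in\mathcal A$ an action ($\mathcal A$ carries a base measure $\mu$), $Z$ a negative control action, $W$ a negative control outcome, $Y$ real outcome, $U$ an unobserved confounder. Potential outcomes $Y(a),Y(a,z),W(a,z)$. $\pi(a\mid x)$ is a given real contrast function. $f(a\mid u,x)$, $f(a\mid w,x)$ are the conditional densities w.r.t. $\mu$ of $A$ given $(U,X)$ and given $(W,X)$. Assumption (NC): (i) $Y=Y(A,Z)$, $W=W(A,Z)$; (ii) $Y(a,z)=Y(a)$; (iii) $W(a,z)=W$; (iv) $(Z,A)\perp(Y(a),W)\mid(U,X)$ for all $a$; (v) $|\pi(a\mid x)/f(a\mid x,u)|<\infty$ for all $a,x,u$. Bridge sets: $\mathbb H_0=\{h\in L_2(W,A,X):\mathbb E[Y-h\mid A,U,X]=0\}$, $\mathbb Q_0=\{q:\pi q\in L_2(Z,A,X),\ \mathbb E[\pi(A\mid X)(q(Z,A,X)-1/f(A\mid U,X))\mid A,U,X]=0\}$ with $(\pi q)(z,a,x)=\pi(a\mid x)q(z,a,x)$; observed bridge sets $\mathbb H_0^{\mathrm{obs}}=\{h\in L_2(W,A,X):\mathbb E[Y-h(W,A,X)\mid Z,A,X]=0\}$, $\mathbb Q_0^{\mathrm{obs}}=\{q:\pi q\in L_2(Z,A,X),\ \mathbb E[\pi(A\mid X)(q(Z,A,X)-1/f(A\mid W,X))\mid W,A,X]=0\}$. Assumption (B): $\mathbb H_0\ne\emptyset$, $\mathbb Q_0\ne\emptyset$.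 $(\mathcal T h)(w,x)=\int h(w,a,x)\pi(a\mid x)d\mu(a)$. Operators $P_z:L_2(W,A,X)\to L_2(Z,A,X)$, $P_z h=\mathbb E[h(W,A,X)\mid Z,A,X]$, and $P_w:L_2(Z,A,X)\to L_2(W,A,X)$, $P_w q=\mathbb E[q(Z,A,X)\mid W,A,X]$. Notation: $P_z(\mathbb H-\mathbb H_0^{\mathrm{obs}})=\{P_z(h-h_0):h\in\mathbb H,h_0\in\mathbb H_0^{\mathrm{obs}}\}$ and $\pi P_w(\mathbb Q-\mathbb Q_0^{\mathrm{obs}})=\{P_w(\pi q-\pi q_0):q\in\mathbb Q,q_0\in\mathbb Q_0^{\mathrm{obs}}\}$. *)

theory Defs
  imports "HOL-Probability.Probability"
begin

definition sigma_gen :: "'o measure \<Rightarrow> ('o \<Rightarrow> 'v) \<Rightarrow> 'v measure \<Rightarrow> 'o measure" where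
  "sigma_gen M V N = vimage_algebra (space M) V N"

definition L2rv :: "'o measure \<Rightarrow> ('o \<Rightarrow> 'v) \<Rightarrow> 'v measure \<Rightarrow> ('v \<Rightarrow> real) \<Rightarrow> bool" where
  "L2rv M V N g \<longleftrightarrow> g \<in> borel_measurable N \<and> integrable M (\<lambda>\<omega>. (g (V \<omega>))\<^sup>2)"

definition cexp_zero :: "'o measure \<Rightarrow> ('o \<Rightarrow> 'v) \<Rightarrow> 'v measure \<Rightarrow> ('o \<Rightarrow> real) \<Rightarrow> bool" where
  "cexp_zero M V N xi \<longleftrightarrow> integrable M xi \<and>
     (AE \<omega> in M. real_cond_exp M (sigma_gen M V N) xi \<omega> = 0)"

definition cexp_version :: "'o measure \<Rightarrow> ('o \<Rightarrow> 'v) \<Rightarrow> 'v measure \<Rightarrow> ('o \<Rightarrow> real) \<Rightarrow> ('v \<Rightarrow> real) \<Rightarrow> bool" where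
  "cexp_version M V N xi g \<longleftrightarrow> g \<in> borel_measurable N \<and>
     (AE \<omega> in M. g (V \<omega>) = real_cond_exp M (sigma_gen M V N) xi \<omega>)"

definition cond_indep :: "'o measure \<Rightarrow> ('o \<Rightarrow> 's) \<Rightarrow> 's measure \<Rightarrow> ('o \<Rightarrow> 't) \<Rightarrow> 't measure
    \<Rightarrow> ('o \<Rightarrow> 'v) \<Rightarrow> 'v measure \<Rightarrow> bool" where
  "cond_indep M S NS T NT V MV \<longleftrightarrow>
     (\<forall>B\<in>sets NS. \<forall>C\<in>sets NT. AE \<omega> in M.
        real_cond_exp M (sigma_gen M V MV) (\<lambda>\<omega>. indicator B (S \<omega>) * indicator C (T \<omega>)) \<omega>
        = real_cond_exp M (sigma_gen M V MV) (\<lambda>\<omega>. indicator B (S \<omega>)) \<omega>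
          * real_cond_exp M (sigma_gen M V MV) (\<lambda>\<omega>. indicator C (T \<omega>)) \<omega>)"

definition cond_density :: "'o measure \<Rightarrow> 'a measure \<Rightarrow> ('o \<Rightarrow> 'a) \<Rightarrow> ('o \<Rightarrow> 'v) \<Rightarrow> 'v measure
    \<Rightarrow> ('a \<Rightarrow> 'v \<Rightarrow> real) \<Rightarrow> bool" where
  "cond_density M mu A V MV f \<longleftrightarrow>
     (\<lambda>(a, v). f a v) \<in> borel_measurable (mu \<Otimes>\<^sub>M MV) \<and>
     (\<forall>a\<in>space mu. \<forall>v\<in>space MV. 0 \<le> f a v) \<and>
     (\<forall>B\<in>sets mu. AE \<omega> in M.
        real_cond_exp M (sigma_gen M V MV) (\<lambda>\<omega>. indicator B (A \<omega>)) \<omega>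
        = (\<integral>a. indicator B a * f a (V \<omega>) \<partial>mu))"

text \<open>Outcome bridge set: h in L2(W,A,X) with E[Y - h(W,A,X) | G] = 0 (G = (A,U,X) or (Z,A,X)).\<close>
definition outcome_bridges :: "'o measure \<Rightarrow> ('o \<Rightarrow> 'w \<times> 'a \<times> 'x) \<Rightarrow> ('w \<times> 'a \<times> 'x) measure
    \<Rightarrow> ('o \<Rightarrow> real) \<Rightarrow> ('o \<Rightarrow> 'g) \<Rightarrow> 'g measure \<Rightarrow> ('w \<times> 'a \<times> 'x \<Rightarrow> real) set" where
  "outcome_bridges M WAX MWAX Y G MG =
     {h. L2rv M WAX MWAX h \<and> cexp_zero M G MG (\<lambda>\<omega>. Y \<omega> - h (WAX \<omega>))}"

text \<open>Action bridge set: ppi q in L2(Z,A,X) with E[ppi(A|X) (q(Z,A,X) - invf) | G] = 0,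
  where invf is 1/f(A|U,X) or 1/f(A|W,X).\<close>
definition action_bridges :: "'o measure \<Rightarrow> ('a \<Rightarrow> 'x \<Rightarrow> real) \<Rightarrow> ('o \<Rightarrow> 'z) \<Rightarrow> ('o \<Rightarrow> 'a)
    \<Rightarrow> ('o \<Rightarrow> 'x) \<Rightarrow> ('z \<times> 'a \<times> 'x) measure \<Rightarrow> ('o \<Rightarrow> real) \<Rightarrow> ('o \<Rightarrow> 'g) \<Rightarrow> 'g measure
    \<Rightarrow> ('z \<times> 'a \<times> 'x \<Rightarrow> real) set" where
  "action_bridges M ppi Z A X MZAX invf G MG =
     {q. L2rv M (\<lambda>\<omega>. (Z \<omega>, A \<omega>, X \<omega>)) MZAX (\<lambda>(z, a, x). ppi a x * q (z, a, x)) \<and>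
         cexp_zero M G MG (\<lambda>\<omega>. ppi (A \<omega>) (X \<omega>) * (q (Z \<omega>, A \<omega>, X \<omega>) - invf \<omega>))}"

definition Top :: "'a measure \<Rightarrow> ('a \<Rightarrow> 'x \<Rightarrow> real) \<Rightarrow> ('w \<times> 'a \<times> 'x \<Rightarrow> real) \<Rightarrow> 'w \<Rightarrow> 'x \<Rightarrow> real" where
  "Top mu ppi h w x = (\<integral>a. h (w, a, x) * ppi a x \<partial>mu)"

definition argmin_on :: "'b set \<Rightarrow> ('b \<Rightarrow> ereal) \<Rightarrow> 'b set" where
  "argmin_on S F = {s \<in> S. \<forall>t\<in>S. F s \<le> F t}"

end

theory Submission
  imports Defs
begin

lemma sg_sfs:
  assumes "prob_space M" "V \<in> measurable M N"
  shows "sigma_finite_subalgebra M (sigma_gen M V N)"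
proof -
  interpret prob_space M by fact
  have "subalgebra M (sigma_gen M V N)"
    unfolding subalgebra_def sigma_gen_def
    using assms(2) by (auto simp: sets_vimage_algebra2 measurable_def)
  then have "finite_measure_subalgebra M (sigma_gen M V N)"
    by unfold_locales
  then show ?thesis by (rule finite_measure_subalgebra_is_sigma_finite)
qed

lemma sg_meas:
  assumes "V \<in> measurable M N" "g \<in> borel_measurable N"
  shows "(\<lambda>\<omega>. g (V \<omega>)) \<in> borel_measurable (sigma_gen M V N)"
  unfolding sigma_gen_def
  using measurable_comp[OF measurable_vimage_algebra1 assms(2), of V "space M"] assms(1)
  by (auto simp: measurable_def o_def)

lemma L2_prod:
  fixes f g :: "_ \<Rightarrow> real"
  assumes "f \<in> borel_measurable M" "g \<in> borel_measurable M"
    "integrable M (\<lambda>x. (f x)\<^sup>2)" "integrable M (\<lambda>x. (g x)\<^sup>2)"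
  shows "integrable M (\<lambda>x. f x * g x)"
proof (rule Bochner_Integration.integrable_bound[of _ "\<lambda>x. (f x)\<^sup>2 + (g x)\<^sup>2"])
  show "integrable M (\<lambda>x. (f x)\<^sup>2 + (g x)\<^sup>2)" using assms by auto
  show "(\<lambda>x. f x * g x) \<in> borel_measurable M" using assms by measurable
  show "AE x in M. norm (f x * g x) \<le> norm ((f x)\<^sup>2 + (g x)\<^sup>2)"
  proof (rule AE_I2)
    fix x
    have "0 \<le> (\<bar>f x\<bar> - \<bar>g x\<bar>)\<^sup>2" by simp
    then have "2 * \<bar>f x * g x\<bar> \<le> (f x)\<^sup>2 + (g x)\<^sup>2"
      by (simp add: power2_diff abs_mult)
    then show "norm (f x * g x) \<le> norm ((f x)\<^sup>2 + (g x)\<^sup>2)" by auto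
  qed
qed

lemma L2_int:
  fixes f :: "_ \<Rightarrow> real"
  assumes "prob_space M" "f \<in> borel_measurable M" "integrable M (\<lambda>x. (f x)\<^sup>2)"
  shows "integrable M f"
proof -
  interpret prob_space M by fact
  have "integrable M (\<lambda>x. f x * 1)"
    by (rule L2_prod) (use assms in auto)
  then show ?thesis by simp
qed

lemma ce_zero_int:
  assumes "prob_space M" "V \<in> measurable M N" "cexp_zero M V N xi"
    "q \<in> borel_measurable N" "integrable M (\<lambda>\<omega>. q (V \<omega>) * xi \<omega>)"
  shows "(\<integral>\<omega>. q (V \<omega>) * xi \<omega> \<partial>M) = 0"
proof -
  interpret sigma_finite_subalgebra M "sigma_gen M V N" using sg_sfs assms by blast
  have xi: "integrable M xi" "AE \<omega> in M. real_cond_exp M (sigma_gen M V N) xi \<omega> = 0"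
    using assms(3) unfolding cexp_zero_def by auto
  have qm: "(\<lambda>\<omega>. q (V \<omega>)) \<in> borel_measurable (sigma_gen M V N)" using sg_meas assms by blast
  have "(\<integral>\<omega>. q (V \<omega>) * xi \<omega> \<partial>M) = (\<integral>\<omega>. q (V \<omega>) * real_cond_exp M (sigma_gen M V N) xi \<omega> \<partial>M)"
    using real_cond_exp_intg(2)[OF assms(5) qm] xi by auto
  also have "\<dots> = (\<integral>\<omega>. 0 \<partial>M)"
    by (rule integral_cong_AE) (use xi measurable_compose[OF assms(2) assms(4)] in auto)
  finally show ?thesis by simp
qed

lemma ce_version_int:
  assumes "prob_space M" "V \<in> measurable M N" "cexp_version M V N zeta q"
    "zeta \<in> borel_measurable M" "integrable M (\<lambda>\<omega>. q (V \<omega>) * zeta \<omega>)"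
  shows "(\<integral>\<omega>. q (V \<omega>) * zeta \<omega> \<partial>M) = (\<integral>\<omega>. (q (V \<omega>))\<^sup>2 \<partial>M)"
proof -
  interpret sigma_finite_subalgebra M "sigma_gen M V N" using sg_sfs assms by blast
  have qv: "q \<in> borel_measurable N" "AE \<omega> in M. q (V \<omega>) = real_cond_exp M (sigma_gen M V N) zeta \<omega>"
    using assms(3) unfolding cexp_version_def by auto
  have qm: "(\<lambda>\<omega>. q (V \<omega>)) \<in> borel_measurable (sigma_gen M V N)" using sg_meas assms qv by blast
  have "(\<integral>\<omega>. q (V \<omega>) * zeta \<omega> \<partial>M) = (\<integral>\<omega>. q (V \<omega>) * real_cond_exp M (sigma_gen M V N) zeta \<omega> \<partial>M)"
    using real_cond_exp_intg(2)[OF assms(5) qm] assms by auto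
  also have "\<dots> = (\<integral>\<omega>. (q (V \<omega>))\<^sup>2 \<partial>M)"
    by (rule integral_cong_AE) (use qv qm assms in \<open>auto simp: power2_eq_square\<close>)
  finally show ?thesis .
qed

lemma sq_int_zero:
  fixes g :: "_ \<Rightarrow> real"
  assumes "integrable M (\<lambda>\<omega>. (g \<omega>)\<^sup>2)" "(\<integral>\<omega>. (g \<omega>)\<^sup>2 \<partial>M) = 0"
  shows "AE \<omega> in M. g \<omega> = 0"
proof -
  have "AE \<omega> in M. (g \<omega>)\<^sup>2 = 0"
    using integral_nonneg_eq_0_iff_AE[OF assms(1)] assms(2) by auto
  then show ?thesis by auto
qed

lemma L2rv_comp:
  assumes "L2rv M V N h" "V \<in> measurable M N"
  shows "(\<lambda>\<omega>. h (V \<omega>)) \<in> borel_measurable M" "integrable M (\<lambda>\<omega>. (h (V \<omega>))\<^sup>2)"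
  using assms unfolding L2rv_def by auto

lemma part_outcome:
  fixes WAX :: "'o \<Rightarrow> 'w \<times> 'a \<times> 'x" and ZAX :: "'o \<Rightarrow> 'r" and Y :: "'o \<Rightarrow> real"
  assumes prob: "prob_space M"
    and mW: "WAX \<in> measurable M MWAX" and mZ: "ZAX \<in> measurable M MZAX"
    and Ym: "Y \<in> borel_measurable M" and Y_L2: "integrable M (\<lambda>\<omega>. (Y \<omega>)\<^sup>2)"
    and H_L2: "\<forall>h\<in>H. L2rv M WAX MWAX h"
    and Q'_L2: "\<forall>q\<in>Q'. L2rv M ZAX MZAX q"
    and real_H: "outcome_bridges M WAX MWAX Y ZAX MZAX \<inter> H \<noteq> {}"
    and closed_Q': "\<forall>h\<in>H. \<forall>h0\<in>outcome_bridges M WAX MWAX Y ZAX MZAX. \<exists>q\<in>Q'.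
                     cexp_version M ZAX MZAX (\<lambda>\<omega>. h (WAX \<omega>) - h0 (WAX \<omega>)) q"
  shows "outcome_bridges M WAX MWAX Y ZAX MZAX \<inter> H
           = argmin_on H (\<lambda>h. SUP q\<in>Q'. ereal ((\<integral>\<omega>. q (ZAX \<omega>) * (h (WAX \<omega>) - Y \<omega>) \<partial>M)\<^sup>2))"
proof -
  interpret prob_space M by fact
  define J where "J = (\<lambda>h. SUP q\<in>Q'. ereal ((\<integral>\<omega>. q (ZAX \<omega>) * (h (WAX \<omega>) - Y \<omega>) \<partial>M)\<^sup>2))"
  define H0 where "H0 = outcome_bridges M WAX MWAX Y ZAX MZAX"
  obtain h0 where h0: "h0 \<in> H0" "h0 \<in> H" using real_H unfolding H0_def by auto
  have Ynt: "integrable M Y" using L2_int[OF prob Ym Y_L2] .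
  have L2q: "(\<lambda>\<omega>. q (ZAX \<omega>)) \<in> borel_measurable M" "integrable M (\<lambda>\<omega>. (q (ZAX \<omega>))\<^sup>2)"
    if "q \<in> Q'" for q using L2rv_comp Q'_L2 that mZ by blast+
  have L2h: "(\<lambda>\<omega>. h (WAX \<omega>)) \<in> borel_measurable M" "integrable M (\<lambda>\<omega>. (h (WAX \<omega>))\<^sup>2)"
    if "L2rv M WAX MWAX h" for h using L2rv_comp that mW by blast+
  have L2hY: "integrable M (\<lambda>\<omega>. (h (WAX \<omega>) - Y \<omega>)\<^sup>2)" if "L2rv M WAX MWAX h" for h
  proof -
    have "integrable M (\<lambda>\<omega>. (h (WAX \<omega>))\<^sup>2 + (Y \<omega>)\<^sup>2 - 2 * (h (WAX \<omega>) * Y \<omega>))"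
      using L2h[OF that] Y_L2 L2_prod[OF L2h(1)[OF that] Ym L2h(2)[OF that] Y_L2] by auto
    then show ?thesis by (simp add: power2_diff algebra_simps)
  qed
  have int_qhY: "integrable M (\<lambda>\<omega>. q (ZAX \<omega>) * (h (WAX \<omega>) - Y \<omega>))"
    if "q \<in> Q'" "L2rv M WAX MWAX h" for q h
    by (rule L2_prod) (use L2q[OF that(1)] L2h[OF that(2)] Ym L2hY[OF that(2)] in auto)
  have zero: "(\<integral>\<omega>. q (ZAX \<omega>) * (h1 (WAX \<omega>) - Y \<omega>) \<partial>M) = 0" if "q \<in> Q'" "h1 \<in> H0" for q h1
  proof -
    have h1: "L2rv M WAX MWAX h1" "cexp_zero M ZAX MZAX (\<lambda>\<omega>. Y \<omega> - h1 (WAX \<omega>))"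
      using that(2) unfolding H0_def outcome_bridges_def by auto
    have qb: "q \<in> borel_measurable MZAX" using Q'_L2 that(1) unfolding L2rv_def by auto
    have "integrable M (\<lambda>\<omega>. - (q (ZAX \<omega>) * (h1 (WAX \<omega>) - Y \<omega>)))"
      using integrable_minus[OF int_qhY[OF that(1) h1(1)]] .
    then have "integrable M (\<lambda>\<omega>. q (ZAX \<omega>) * (Y \<omega> - h1 (WAX \<omega>)))"
      by (simp add: algebra_simps)
    from ce_zero_int[OF prob mZ h1(2) qb this]
    have "(\<integral>\<omega>. q (ZAX \<omega>) * (Y \<omega> - h1 (WAX \<omega>)) \<partial>M) = 0" .
    moreover have "(\<integral>\<omega>. q (ZAX \<omega>) * (h1 (WAX \<omega>) - Y \<omega>) \<partial>M)
        = - (\<integral>\<omega>. q (ZAX \<omega>) * (Y \<omega> - h1 (WAX \<omega>)) \<partial>M)"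
      by (subst integral_minus[symmetric]) (simp add: algebra_simps)
    ultimately show ?thesis by simp
  qed
  obtain qq where "qq \<in> Q'" using closed_Q' h0 unfolding H0_def by blast
  then have Qne: "Q' \<noteq> {}" by auto
  have Jnn: "0 \<le> J h" for h
  proof -
    have "ereal ((\<integral>\<omega>. qq (ZAX \<omega>) * (h (WAX \<omega>) - Y \<omega>) \<partial>M)\<^sup>2) \<le> J h"
      unfolding J_def using \<open>qq \<in> Q'\<close> by (rule SUP_upper)
    moreover have "0 \<le> ereal ((\<integral>\<omega>. qq (ZAX \<omega>) * (h (WAX \<omega>) - Y \<omega>) \<partial>M)\<^sup>2)" by simp
    ultimately show ?thesis by (rule order.trans[rotated])
  qed
  have J0: "J h1 = 0" if "h1 \<in> H0" for h1
  proof -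
    have "J h1 = (SUP q\<in>Q'. ereal 0)" unfolding J_def
      by (rule SUP_cong) (use zero that in auto)
    then show ?thesis using Qne by simp
  qed
  have arg: "argmin_on H J = {h \<in> H. J h \<le> 0}"
  proof (intro equalityI subsetI)
    fix s assume "s \<in> argmin_on H J"
    then have "s \<in> H" "J s \<le> J h0" using h0 unfolding argmin_on_def by auto
    then show "s \<in> {h \<in> H. J h \<le> 0}" using J0[OF h0(1)] by auto
  next
    fix s assume s: "s \<in> {h \<in> H. J h \<le> 0}"
    have "J s \<le> J t" for t using s Jnn[of t] by auto
    then show "s \<in> argmin_on H J" using s unfolding argmin_on_def by auto
  qed
  have "H0 \<inter> H = {h \<in> H. J h \<le> 0}"
  proof (intro equalityI subsetI)
    fix h assume "h \<in> H0 \<inter> H" then show "h \<in> {h \<in> H. J h \<le> 0}" using J0 by auto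
  next
    fix h assume "h \<in> {h \<in> H. J h \<le> 0}"
    then have hH: "h \<in> H" and Jh: "J h \<le> 0" by auto
    have hL: "L2rv M WAX MWAX h" using H_L2 hH by auto
    have h0L: "L2rv M WAX MWAX h0" using H_L2 h0 by auto
    have all0: "(\<integral>\<omega>. q (ZAX \<omega>) * (h (WAX \<omega>) - Y \<omega>) \<partial>M) = 0" if "q \<in> Q'" for q
    proof -
      have "ereal ((\<integral>\<omega>. q (ZAX \<omega>) * (h (WAX \<omega>) - Y \<omega>) \<partial>M)\<^sup>2) \<le> J h"
        unfolding J_def using that by (rule SUP_upper)
      then have "(\<integral>\<omega>. q (ZAX \<omega>) * (h (WAX \<omega>) - Y \<omega>) \<partial>M)\<^sup>2 \<le> 0" using Jh
        by (metis ereal_less_eq(3) order.trans zero_ereal_def)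
      then show ?thesis by simp
    qed
    obtain q where q: "q \<in> Q'" "cexp_version M ZAX MZAX (\<lambda>\<omega>. h (WAX \<omega>) - h0 (WAX \<omega>)) q"
      using closed_Q' hH h0 unfolding H0_def by blast
    have dm: "(\<lambda>\<omega>. h (WAX \<omega>) - h0 (WAX \<omega>)) \<in> borel_measurable M"
      using L2h(1)[OF hL] L2h(1)[OF h0L] by auto
    have idiff: "(\<lambda>\<omega>. q (ZAX \<omega>) * (h (WAX \<omega>) - h0 (WAX \<omega>))) =
        (\<lambda>\<omega>. q (ZAX \<omega>) * (h (WAX \<omega>) - Y \<omega>) - q (ZAX \<omega>) * (h0 (WAX \<omega>) - Y \<omega>))"
      by (auto simp: algebra_simps)
    have intd: "integrable M (\<lambda>\<omega>. q (ZAX \<omega>) * (h (WAX \<omega>) - h0 (WAX \<omega>)))"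
      unfolding idiff using int_qhY[OF q(1) hL] int_qhY[OF q(1) h0L] by auto
    have "(\<integral>\<omega>. q (ZAX \<omega>) * (h (WAX \<omega>) - h0 (WAX \<omega>)) \<partial>M) = 0"
      unfolding idiff
      using all0[OF q(1)] zero[OF q(1) h0(1)] int_qhY[OF q(1) hL] int_qhY[OF q(1) h0L] by simp
    then have "(\<integral>\<omega>. (q (ZAX \<omega>))\<^sup>2 \<partial>M) = 0"
      using ce_version_int[OF prob mZ q(2) dm intd] by simp
    then have qz: "AE \<omega> in M. q (ZAX \<omega>) = 0"
      by (rule sq_int_zero[OF L2q(2)[OF q(1)]])
    have hv: "AE \<omega> in M. q (ZAX \<omega>) = real_cond_exp M (sigma_gen M ZAX MZAX) (\<lambda>\<omega>. h (WAX \<omega>) - h0 (WAX \<omega>)) \<omega>"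
      using q(2) unfolding cexp_version_def by auto
    have h0c: "integrable M (\<lambda>\<omega>. Y \<omega> - h0 (WAX \<omega>))"
       "AE \<omega> in M. real_cond_exp M (sigma_gen M ZAX MZAX) (\<lambda>\<omega>. Y \<omega> - h0 (WAX \<omega>)) \<omega> = 0"
      using h0 unfolding H0_def outcome_bridges_def cexp_zero_def by auto
    interpret sigma_finite_subalgebra M "sigma_gen M ZAX MZAX" using sg_sfs prob mZ by blast
    have inth: "integrable M (\<lambda>\<omega>. h (WAX \<omega>))" "integrable M (\<lambda>\<omega>. h0 (WAX \<omega>))"
      using L2_int[OF prob L2h(1)[OF hL] L2h(2)[OF hL]] L2_int[OF prob L2h(1)[OF h0L] L2h(2)[OF h0L]] by auto
    have inthh: "integrable M (\<lambda>\<omega>. h (WAX \<omega>) - h0 (WAX \<omega>))" using inth by auto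
    have eq: "(\<lambda>\<omega>. Y \<omega> - h (WAX \<omega>)) = (\<lambda>\<omega>. (Y \<omega> - h0 (WAX \<omega>)) - (h (WAX \<omega>) - h0 (WAX \<omega>)))"
      by auto
    have "AE \<omega> in M. real_cond_exp M (sigma_gen M ZAX MZAX) (\<lambda>\<omega>. Y \<omega> - h (WAX \<omega>)) \<omega> =
       real_cond_exp M (sigma_gen M ZAX MZAX) (\<lambda>\<omega>. Y \<omega> - h0 (WAX \<omega>)) \<omega>
       - real_cond_exp M (sigma_gen M ZAX MZAX) (\<lambda>\<omega>. h (WAX \<omega>) - h0 (WAX \<omega>)) \<omega>"
      unfolding eq by (rule real_cond_exp_diff[OF h0c(1) inthh])
    then have "AE \<omega> in M. real_cond_exp M (sigma_gen M ZAX MZAX) (\<lambda>\<omega>. Y \<omega> - h (WAX \<omega>)) \<omega> = 0"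
      using h0c(2) hv qz by eventually_elim auto
    moreover have "integrable M (\<lambda>\<omega>. Y \<omega> - h (WAX \<omega>))" using Ynt inth by auto
    ultimately have "h \<in> H0" using hL unfolding H0_def outcome_bridges_def cexp_zero_def by auto
    then show "h \<in> H0 \<inter> H" using hH by auto
  qed
  then show ?thesis using arg unfolding H0_def J_def by simp
qed

lemma L2rv_pi:
  assumes "L2rv M (\<lambda>\<omega>. (Z \<omega>, A \<omega>, X \<omega>)) MZAX (\<lambda>(z, a, x). ppi a x * q (z, a, x))"
    "(\<lambda>\<omega>. (Z \<omega>, A \<omega>, X \<omega>)) \<in> measurable M MZAX"
  shows "(\<lambda>\<omega>. ppi (A \<omega>) (X \<omega>) * q (Z \<omega>, A \<omega>, X \<omega>)) \<in> borel_measurable M"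
    "integrable M (\<lambda>\<omega>. (ppi (A \<omega>) (X \<omega>) * q (Z \<omega>, A \<omega>, X \<omega>))\<^sup>2)"
  using L2rv_comp[OF assms] by simp_all

lemma part_action:
  fixes WAX :: "'o \<Rightarrow> 'w \<times> 'a \<times> 'x" and Z :: "'o \<Rightarrow> 'z" and A :: "'o \<Rightarrow> 'a" and X :: "'o \<Rightarrow> 'x"
    and Tf :: "('w \<times> 'a \<times> 'x \<Rightarrow> real) \<Rightarrow> 'o \<Rightarrow> real" and r :: "'o \<Rightarrow> real"
  assumes prob: "prob_space M"
    and mW: "WAX \<in> measurable M MWAX" and mZ: "(\<lambda>\<omega>. (Z \<omega>, A \<omega>, X \<omega>)) \<in> measurable M MZAX"
    and Q_L2: "\<forall>q\<in>Q. L2rv M (\<lambda>\<omega>. (Z \<omega>, A \<omega>, X \<omega>)) MZAX (\<lambda>(z, a, x). ppi a x * q (z, a, x))"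
    and H'_L2: "\<forall>h\<in>H'. L2rv M WAX MWAX h"
    and real_Q: "action_bridges M ppi Z A X MZAX r WAX MWAX \<inter> Q \<noteq> {}"
    and closed_H': "\<forall>q\<in>Q. \<forall>q0\<in>action_bridges M ppi Z A X MZAX r WAX MWAX.
                     \<exists>h\<in>H'. cexp_version M WAX MWAX
                        (\<lambda>\<omega>. ppi (A \<omega>) (X \<omega>) * q (Z \<omega>, A \<omega>, X \<omega>) - ppi (A \<omega>) (X \<omega>) * q0 (Z \<omega>, A \<omega>, X \<omega>)) h"
    and KEY: "\<forall>q1\<in>action_bridges M ppi Z A X MZAX r WAX MWAX. \<forall>h\<in>H'.
                 integrable M (Tf h) \<and>
                 (\<integral>\<omega>. ppi (A \<omega>) (X \<omega>) * q1 (Z \<omega>, A \<omega>, X \<omega>) * h (WAX \<omega>) \<partial>M) = (\<integral>\<omega>. Tf h \<omega> \<partial>M)"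
  shows "action_bridges M ppi Z A X MZAX r WAX MWAX \<inter> Q
           = argmin_on Q (\<lambda>q. SUP h\<in>H'. ereal ((\<integral>\<omega>. ppi (A \<omega>) (X \<omega>) * q (Z \<omega>, A \<omega>, X \<omega>) * h (WAX \<omega>)
                                                  - Tf h \<omega> \<partial>M)\<^sup>2))"
proof -
  interpret prob_space M by fact
  define Q0 where "Q0 = action_bridges M ppi Z A X MZAX r WAX MWAX"
  define PQ where "PQ = (\<lambda>q \<omega>. ppi (A \<omega>) (X \<omega>) * q (Z \<omega>, A \<omega>, X \<omega>))"
  define K where "K = (\<lambda>q. SUP h\<in>H'. ereal ((\<integral>\<omega>. ppi (A \<omega>) (X \<omega>) * q (Z \<omega>, A \<omega>, X \<omega>) * h (WAX \<omega>)
                                                  - Tf h \<omega> \<partial>M)\<^sup>2))"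
  obtain q0 where q0: "q0 \<in> Q0" "q0 \<in> Q" using real_Q unfolding Q0_def by auto
  have L2Q: "PQ q \<in> borel_measurable M" "integrable M (\<lambda>\<omega>. (PQ q \<omega>)\<^sup>2)"
    if "L2rv M (\<lambda>\<omega>. (Z \<omega>, A \<omega>, X \<omega>)) MZAX (\<lambda>(z, a, x). ppi a x * q (z, a, x))" for q
    unfolding PQ_def by (rule L2rv_pi[OF that mZ])+
  have Q0L: "L2rv M (\<lambda>\<omega>. (Z \<omega>, A \<omega>, X \<omega>)) MZAX (\<lambda>(z, a, x). ppi a x * q (z, a, x))"
    if "q \<in> Q0" for q using that unfolding Q0_def action_bridges_def by auto
  have QL: "L2rv M (\<lambda>\<omega>. (Z \<omega>, A \<omega>, X \<omega>)) MZAX (\<lambda>(z, a, x). ppi a x * q (z, a, x))"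
    if "q \<in> Q" for q using that Q_L2 by auto
  have L2h: "(\<lambda>\<omega>. h (WAX \<omega>)) \<in> borel_measurable M" "integrable M (\<lambda>\<omega>. (h (WAX \<omega>))\<^sup>2)"
    if "h \<in> H'" for h using L2rv_comp H'_L2 that mW by blast+
  have intP: "integrable M (\<lambda>\<omega>. PQ q \<omega> * h (WAX \<omega>))"
    if "L2rv M (\<lambda>\<omega>. (Z \<omega>, A \<omega>, X \<omega>)) MZAX (\<lambda>(z, a, x). ppi a x * q (z, a, x))" "h \<in> H'" for q h
    by (rule L2_prod) (use L2Q[OF that(1)] L2h[OF that(2)] in auto)
  have Dsplit: "(\<integral>\<omega>. PQ q \<omega> * h (WAX \<omega>) - Tf h \<omega> \<partial>M)
      = (\<integral>\<omega>. PQ q \<omega> * h (WAX \<omega>) \<partial>M) - (\<integral>\<omega>. Tf h \<omega> \<partial>M)"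
    if "L2rv M (\<lambda>\<omega>. (Z \<omega>, A \<omega>, X \<omega>)) MZAX (\<lambda>(z, a, x). ppi a x * q (z, a, x))" "h \<in> H'" for q h
    by (rule Bochner_Integration.integral_diff[OF intP[OF that]]) (use KEY q0 that(2) Q0_def in auto)
  have Kdef: "K q = (SUP h\<in>H'. ereal ((\<integral>\<omega>. PQ q \<omega> * h (WAX \<omega>) - Tf h \<omega> \<partial>M)\<^sup>2))" for q
    unfolding K_def PQ_def by simp
  have zero: "(\<integral>\<omega>. PQ q1 \<omega> * h (WAX \<omega>) - Tf h \<omega> \<partial>M) = 0" if "q1 \<in> Q0" "h \<in> H'" for q1 h
    using Dsplit[OF Q0L[OF that(1)] that(2)] KEY that unfolding Q0_def PQ_def by auto
  obtain hh where "hh \<in> H'" using closed_H' q0 unfolding Q0_def by blast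
  then have Hne: "H' \<noteq> {}" by auto
  have Knn: "0 \<le> K q" for q
  proof -
    have "ereal ((\<integral>\<omega>. PQ q \<omega> * hh (WAX \<omega>) - Tf hh \<omega> \<partial>M)\<^sup>2) \<le> K q"
      unfolding Kdef using \<open>hh \<in> H'\<close> by (rule SUP_upper)
    moreover have "0 \<le> ereal ((\<integral>\<omega>. PQ q \<omega> * hh (WAX \<omega>) - Tf hh \<omega> \<partial>M)\<^sup>2)" by simp
    ultimately show ?thesis by (rule order.trans[rotated])
  qed
  have K0: "K q1 = 0" if "q1 \<in> Q0" for q1
  proof -
    have "K q1 = (SUP h\<in>H'. ereal 0)" unfolding Kdef
      by (rule SUP_cong) (use zero[OF that] in simp_all)
    then show ?thesis using Hne by simp
  qed
  have arg: "argmin_on Q K = {q \<in> Q. K q \<le> 0}"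
  proof (intro equalityI subsetI)
    fix s assume "s \<in> argmin_on Q K"
    then have "s \<in> Q" "K s \<le> K q0" using q0 unfolding argmin_on_def by auto
    then show "s \<in> {q \<in> Q. K q \<le> 0}" using K0[OF q0(1)] by auto
  next
    fix s assume s: "s \<in> {q \<in> Q. K q \<le> 0}"
    have "K s \<le> K t" for t using s Knn[of t] by auto
    then show "s \<in> argmin_on Q K" using s unfolding argmin_on_def by auto
  qed
  have "Q0 \<inter> Q = {q \<in> Q. K q \<le> 0}"
  proof (intro equalityI subsetI)
    fix q assume "q \<in> Q0 \<inter> Q" then show "q \<in> {q \<in> Q. K q \<le> 0}" using K0 by auto
  next
    fix q assume "q \<in> {q \<in> Q. K q \<le> 0}"
    then have qQ: "q \<in> Q" and Kq: "K q \<le> 0" by auto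
    have qL: "L2rv M (\<lambda>\<omega>. (Z \<omega>, A \<omega>, X \<omega>)) MZAX (\<lambda>(z, a, x). ppi a x * q (z, a, x))"
      using QL[OF qQ] .
    have q0L: "L2rv M (\<lambda>\<omega>. (Z \<omega>, A \<omega>, X \<omega>)) MZAX (\<lambda>(z, a, x). ppi a x * q (z, a, x))"
      if "q = q0" for q using Q0L[OF q0(1)] that by simp
    have all0: "(\<integral>\<omega>. PQ q \<omega> * h (WAX \<omega>) - Tf h \<omega> \<partial>M) = 0" if "h \<in> H'" for h
    proof -
      have "ereal ((\<integral>\<omega>. PQ q \<omega> * h (WAX \<omega>) - Tf h \<omega> \<partial>M)\<^sup>2) \<le> K q"
        unfolding Kdef using that by (rule SUP_upper)
      then have "(\<integral>\<omega>. PQ q \<omega> * h (WAX \<omega>) - Tf h \<omega> \<partial>M)\<^sup>2 \<le> 0" using Kq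
        by (metis ereal_less_eq(3) order.trans zero_ereal_def)
      then show ?thesis by simp
    qed
    obtain h where h: "h \<in> H'" "cexp_version M WAX MWAX (\<lambda>\<omega>. PQ q \<omega> - PQ q0 \<omega>) h"
      using closed_H' qQ q0 unfolding Q0_def PQ_def by blast
    have dm: "(\<lambda>\<omega>. PQ q \<omega> - PQ q0 \<omega>) \<in> borel_measurable M"
      using L2Q(1)[OF qL] L2Q(1)[OF Q0L[OF q0(1)]] by (rule borel_measurable_diff)
    have i1: "integrable M (\<lambda>\<omega>. PQ q \<omega> * h (WAX \<omega>))" by (rule intP[OF qL h(1)])
    have i2: "integrable M (\<lambda>\<omega>. PQ q0 \<omega> * h (WAX \<omega>))" by (rule intP[OF Q0L[OF q0(1)] h(1)])
    have idiff: "(\<lambda>\<omega>. h (WAX \<omega>) * (PQ q \<omega> - PQ q0 \<omega>)) =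
        (\<lambda>\<omega>. PQ q \<omega> * h (WAX \<omega>) - PQ q0 \<omega> * h (WAX \<omega>))"
      by (auto simp: algebra_simps)
    have intd: "integrable M (\<lambda>\<omega>. h (WAX \<omega>) * (PQ q \<omega> - PQ q0 \<omega>))"
      unfolding idiff by (rule Bochner_Integration.integrable_diff[OF i1 i2])
    have e1: "(\<integral>\<omega>. PQ q \<omega> * h (WAX \<omega>) \<partial>M) = (\<integral>\<omega>. Tf h \<omega> \<partial>M)"
      using all0[OF h(1)] Dsplit[OF qL h(1)] by simp
    have e2: "(\<integral>\<omega>. PQ q0 \<omega> * h (WAX \<omega>) \<partial>M) = (\<integral>\<omega>. Tf h \<omega> \<partial>M)"
      using zero[OF q0(1) h(1)] Dsplit[OF Q0L[OF q0(1)] h(1)] by simp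
    have "(\<integral>\<omega>. h (WAX \<omega>) * (PQ q \<omega> - PQ q0 \<omega>) \<partial>M) = 0"
      unfolding idiff Bochner_Integration.integral_diff[OF i1 i2] e1 e2 by simp
    then have "(\<integral>\<omega>. (h (WAX \<omega>))\<^sup>2 \<partial>M) = 0"
      using ce_version_int[OF prob mW h(2) dm intd] by simp
    then have hz: "AE \<omega> in M. h (WAX \<omega>) = 0"
      by (rule sq_int_zero[OF L2h(2)[OF h(1)]])
    have hv: "AE \<omega> in M. h (WAX \<omega>) = real_cond_exp M (sigma_gen M WAX MWAX) (\<lambda>\<omega>. PQ q \<omega> - PQ q0 \<omega>) \<omega>"
      using h(2) unfolding cexp_version_def by auto
    have q0c: "integrable M (\<lambda>\<omega>. ppi (A \<omega>) (X \<omega>) * (q0 (Z \<omega>, A \<omega>, X \<omega>) - r \<omega>))"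
       "AE \<omega> in M. real_cond_exp M (sigma_gen M WAX MWAX) (\<lambda>\<omega>. ppi (A \<omega>) (X \<omega>) * (q0 (Z \<omega>, A \<omega>, X \<omega>) - r \<omega>)) \<omega> = 0"
      using q0(1) unfolding Q0_def action_bridges_def cexp_zero_def by auto
    interpret sigma_finite_subalgebra M "sigma_gen M WAX MWAX" using sg_sfs prob mW by blast
    have intq: "integrable M (PQ q)" by (rule L2_int[OF prob L2Q(1)[OF qL] L2Q(2)[OF qL]])
    have intq0: "integrable M (PQ q0)" by (rule L2_int[OF prob L2Q(1)[OF Q0L[OF q0(1)]] L2Q(2)[OF Q0L[OF q0(1)]]])
    have intqq: "integrable M (\<lambda>\<omega>. PQ q \<omega> - PQ q0 \<omega>)" by (rule Bochner_Integration.integrable_diff[OF intq intq0])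
    have eq: "(\<lambda>\<omega>. ppi (A \<omega>) (X \<omega>) * (q (Z \<omega>, A \<omega>, X \<omega>) - r \<omega>)) =
       (\<lambda>\<omega>. (PQ q \<omega> - PQ q0 \<omega>) + ppi (A \<omega>) (X \<omega>) * (q0 (Z \<omega>, A \<omega>, X \<omega>) - r \<omega>))"
      unfolding PQ_def by (auto simp: algebra_simps)
    have "AE \<omega> in M. real_cond_exp M (sigma_gen M WAX MWAX) (\<lambda>\<omega>. ppi (A \<omega>) (X \<omega>) * (q (Z \<omega>, A \<omega>, X \<omega>) - r \<omega>)) \<omega> =
       real_cond_exp M (sigma_gen M WAX MWAX) (\<lambda>\<omega>. PQ q \<omega> - PQ q0 \<omega>) \<omega>
       + real_cond_exp M (sigma_gen M WAX MWAX) (\<lambda>\<omega>. ppi (A \<omega>) (X \<omega>) * (q0 (Z \<omega>, A \<omega>, X \<omega>) - r \<omega>)) \<omega>"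
      unfolding eq by (rule real_cond_exp_add[OF intqq q0c(1)])
    then have "AE \<omega> in M. real_cond_exp M (sigma_gen M WAX MWAX) (\<lambda>\<omega>. ppi (A \<omega>) (X \<omega>) * (q (Z \<omega>, A \<omega>, X \<omega>) - r \<omega>)) \<omega> = 0"
      using q0c(2) hv hz by eventually_elim simp
    moreover have "integrable M (\<lambda>\<omega>. ppi (A \<omega>) (X \<omega>) * (q (Z \<omega>, A \<omega>, X \<omega>) - r \<omega>))"
      unfolding eq by (rule Bochner_Integration.integrable_add[OF intqq q0c(1)])
    ultimately have "q \<in> Q0" using qL unfolding Q0_def action_bridges_def cexp_zero_def by simp
    then show "q \<in> Q0 \<inter> Q" using qQ by simp
  qed
  then show ?thesis using arg unfolding Q0_def K_def by simp
qed

lemma dens_ae: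
  assumes prob: "prob_space M" and mA: "A \<in> measurable M mu" and mV: "V \<in> measurable M MV"
    and cd: "cond_density M mu A V MV f" and B: "B \<in> sets mu"
  shows "AE \<omega> in M. integrable mu (\<lambda>a. f a (V \<omega>)) \<and>
     (\<integral>\<^sup>+ a. ennreal (indicator B a * f a (V \<omega>)) \<partial>mu) =
         ennreal (real_cond_exp M (sigma_gen M V MV) (\<lambda>\<omega>. indicator B (A \<omega>)) \<omega>)"
proof -
  interpret prob_space M by fact
  interpret S: sigma_finite_subalgebra M "sigma_gen M V MV" using sg_sfs prob mV by blast
  have fm: "(\<lambda>(a, v). f a v) \<in> borel_measurable (mu \<Otimes>\<^sub>M MV)"
    and fnn: "\<forall>a\<in>space mu. \<forall>v\<in>space MV. 0 \<le> f a v"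
    and fc: "\<forall>B\<in>sets mu. AE \<omega> in M.
        real_cond_exp M (sigma_gen M V MV) (\<lambda>\<omega>. indicator B (A \<omega>)) \<omega>
        = (\<integral>a. indicator B a * f a (V \<omega>) \<partial>mu)"
    using cd unfolding cond_density_def by auto
  have c1: "AE \<omega> in M. real_cond_exp M (sigma_gen M V MV) (\<lambda>\<omega>. indicator (space mu) (A \<omega>)) \<omega>
        = real_cond_exp M (sigma_gen M V MV) (\<lambda>\<omega>. 1) \<omega>"
  proof (rule S.real_cond_exp_cong)
    show "AE \<omega> in M. indicator (space mu) (A \<omega>) = (1::real)"
      using mA by (auto simp: measurable_def indicator_def Pi_iff intro!: AE_I2)
    show "(\<lambda>\<omega>. indicator (space mu) (A \<omega>) :: real) \<in> borel_measurable M"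
      using mA by measurable
  qed auto
  have c2: "AE \<omega> in M. real_cond_exp M (sigma_gen M V MV) (\<lambda>\<omega>. 1) \<omega> = 1"
    by (rule S.real_cond_exp_F_meas) auto
  have c3: "AE \<omega> in M. real_cond_exp M (sigma_gen M V MV) (\<lambda>\<omega>. indicator (space mu) (A \<omega>)) \<omega>
        = (\<integral>a. indicator (space mu) a * f a (V \<omega>) \<partial>mu)" using fc by auto
  have c4: "AE \<omega> in M. real_cond_exp M (sigma_gen M V MV) (\<lambda>\<omega>. indicator B (A \<omega>)) \<omega>
        = (\<integral>a. indicator B a * f a (V \<omega>) \<partial>mu)" using fc B by auto
  show ?thesis
    using c1 c2 c3 c4 AE_space
  proof eventually_elim
    case (elim \<omega>)
    have Vs: "V \<omega> \<in> space MV" using elim mV by (auto simp: measurable_def)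
    have fvm: "(\<lambda>a. f a (V \<omega>)) \<in> borel_measurable mu"
    proof -
      have "(\<lambda>a. (\<lambda>(a, v). f a v) (a, V \<omega>)) \<in> borel_measurable mu"
        by (rule measurable_compose[OF measurable_Pair2'[OF Vs] fm])
      then show ?thesis by simp
    qed
    have "(\<integral>a. indicator (space mu) a * f a (V \<omega>) \<partial>mu) = 1" using elim by simp
    then have i1: "integrable mu (\<lambda>a. indicator (space mu) a * f a (V \<omega>))"
    proof (rule contrapos_pp)
      assume "\<not> integrable mu (\<lambda>a. indicator (space mu) a * f a (V \<omega>))"
      then have "(\<integral>a. indicator (space mu) a * f a (V \<omega>) \<partial>mu) = 0" by (rule not_integrable_integral_eq)
      then show "(\<integral>a. indicator (space mu) a * f a (V \<omega>) \<partial>mu) \<noteq> 1" by simp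
    qed
    have ii: "\<And>a. a \<in> space mu \<Longrightarrow> indicator (space mu) a * f a (V \<omega>) = f a (V \<omega>)" by simp
    have "integrable mu (\<lambda>a. indicator (space mu) a * f a (V \<omega>)) \<longleftrightarrow> integrable mu (\<lambda>a. f a (V \<omega>))"
      by (rule Bochner_Integration.integrable_cong[OF refl ii])
    then have int: "integrable mu (\<lambda>a. f a (V \<omega>))" using i1 by simp
    have intB: "integrable mu (\<lambda>a. indicator B a * f a (V \<omega>))"
      using integrable_mult_indicator[OF B int] by simp
    have "(\<integral>\<^sup>+ a. ennreal (indicator B a * f a (V \<omega>)) \<partial>mu) = ennreal (\<integral>a. indicator B a * f a (V \<omega>) \<partial>mu)"
      by (rule nn_integral_eq_integral[OF intB]) (use fnn Vs in \<open>auto simp: indicator_def\<close>)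
    then show ?case using int elim by simp
  qed
qed

lemma dens_distr:
  assumes prob: "prob_space M" and sf: "sigma_finite_measure mu"
    and mA: "A \<in> measurable M mu" and mV: "V \<in> measurable M MV"
    and cd: "cond_density M mu A V MV f"
  shows "distr M (distr M MV V \<Otimes>\<^sub>M mu) (\<lambda>\<omega>. (V \<omega>, A \<omega>))
       = density (distr M MV V \<Otimes>\<^sub>M mu) (\<lambda>(v, a). ennreal (f a v))"
proof -
  interpret prob_space M by fact
  interpret S: sigma_finite_subalgebra M "sigma_gen M V MV" using sg_sfs prob mV by blast
  define PV where "PV = distr M MV V"
  interpret PVp: prob_space PV unfolding PV_def by (rule prob_space_distr[OF mV])
  interpret mus: sigma_finite_measure mu by fact
  interpret PP: pair_sigma_finite PV mu ..
  have fm: "(\<lambda>(a, v). f a v) \<in> borel_measurable (mu \<Otimes>\<^sub>M MV)"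
    using cd unfolding cond_density_def by auto
  have setsP: "sets (PV \<Otimes>\<^sub>M mu) = sets (MV \<Otimes>\<^sub>M mu)"
    by (rule sets_pair_measure_cong) (simp_all add: PV_def)
  have fm2: "(\<lambda>(v, a). f a v) \<in> borel_measurable (MV \<Otimes>\<^sub>M mu)"
  proof -
    have "(\<lambda>x. (\<lambda>(a, v). f a v) ((\<lambda>(x, y). (y, x)) x)) \<in> borel_measurable (MV \<Otimes>\<^sub>M mu)"
      by (rule measurable_compose[OF measurable_pair_swap' fm])
    then show ?thesis by (simp add: split_beta)
  qed
  have fm3: "(\<lambda>(v, a). ennreal (f a v)) \<in> borel_measurable (PV \<Otimes>\<^sub>M mu)"
    using fm2 unfolding measurable_cong_sets[OF setsP refl] by measurable
  have mVA: "(\<lambda>\<omega>. (V \<omega>, A \<omega>)) \<in> measurable M (PV \<Otimes>\<^sub>M mu)"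
    unfolding measurable_cong_sets[OF refl setsP] using mV mA by measurable
  define \<Omega> where "\<Omega> = space MV \<times> space mu"
  define E where "E = {C \<times> B | C B. C \<in> sets MV \<and> B \<in> sets mu}"
  show ?thesis
    unfolding PV_def[symmetric]
  proof (rule measure_eqI_generator_eq[where E=E and \<Omega>=\<Omega> and A="\<lambda>_. \<Omega>"])
    show "Int_stable E" unfolding E_def by (rule Int_stable_pair_measure_generator)
    show "E \<subseteq> Pow \<Omega>"
    proof
      fix x assume "x \<in> E"
      then obtain C B where "x = C \<times> B" "C \<in> sets MV" "B \<in> sets mu" unfolding E_def by auto
      then show "x \<in> Pow \<Omega>" unfolding \<Omega>_def using sets.sets_into_space[of C MV] sets.sets_into_space[of B mu] by auto
    qed
    show "sets (distr M (PV \<Otimes>\<^sub>M mu) (\<lambda>\<omega>. (V \<omega>, A \<omega>))) = sigma_sets \<Omega> E"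
      unfolding E_def \<Omega>_def by (simp add: setsP sets_pair_measure PV_def)
    show "sets (density (PV \<Otimes>\<^sub>M mu) (\<lambda>(v, a). ennreal (f a v))) = sigma_sets \<Omega> E"
      unfolding E_def \<Omega>_def by (simp add: setsP sets_pair_measure PV_def)
    show "range (\<lambda>_. \<Omega>) \<subseteq> E" unfolding E_def \<Omega>_def by auto
    show "(\<Union>i. \<Omega>) = \<Omega>" by simp
    show "emeasure (distr M (PV \<Otimes>\<^sub>M mu) (\<lambda>\<omega>. (V \<omega>, A \<omega>))) \<Omega> \<noteq> \<infinity>" for i :: nat
    proof -
      interpret D: prob_space "distr M (PV \<Otimes>\<^sub>M mu) (\<lambda>\<omega>. (V \<omega>, A \<omega>))"
        by (rule prob_space_distr[OF mVA])
      show ?thesis by simp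
    qed
  next
    fix R assume "R \<in> E"
    then obtain C B where R: "R = C \<times> B" and C: "C \<in> sets MV" and B: "B \<in> sets mu"
      unfolding E_def by auto
    have Rs: "R \<in> sets (PV \<Otimes>\<^sub>M mu)" unfolding R setsP using C B by simp
    define ce where "ce = real_cond_exp M (sigma_gen M V MV) (\<lambda>\<omega>. indicator B (A \<omega>))"
    have iCm: "(\<lambda>\<omega>. indicator C (V \<omega>) :: real) \<in> borel_measurable (sigma_gen M V MV)"
      by (rule sg_meas[OF mV]) (use C in measurable)
    have iBm: "(\<lambda>\<omega>. indicator B (A \<omega>) :: real) \<in> borel_measurable M"
      using mA B by measurable
    have iCm': "(\<lambda>\<omega>. indicator C (V \<omega>) :: real) \<in> borel_measurable M"
      using mV C by measurable
    have iprod: "integrable M (\<lambda>\<omega>. indicator C (V \<omega>) * indicator B (A \<omega>) :: real)"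
    proof (rule Bochner_Integration.integrable_bound[of _ "\<lambda>_. 1::real"])
      show "integrable M (\<lambda>_. 1::real)" by simp
      show "(\<lambda>\<omega>. indicator C (V \<omega>) * indicator B (A \<omega>) :: real) \<in> borel_measurable M"
        using iCm' iBm by (rule borel_measurable_times)
      show "AE \<omega> in M. norm (indicator C (V \<omega>) * indicator B (A \<omega>) :: real) \<le> norm (1::real)"
        by (auto simp: indicator_def)
    qed
    have ce1: "integrable M (\<lambda>\<omega>. indicator C (V \<omega>) * ce \<omega>)"
      "(\<integral>\<omega>. indicator C (V \<omega>) * ce \<omega> \<partial>M) = (\<integral>\<omega>. indicator C (V \<omega>) * indicator B (A \<omega>) \<partial>M)"
      unfolding ce_def using S.real_cond_exp_intg[OF iprod iCm iBm] by auto
    have cepos: "AE \<omega> in M. 0 \<le> ce \<omega>"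
      unfolding ce_def by (rule S.real_cond_exp_pos) (use iBm in auto)
    have lhs: "emeasure (distr M (PV \<Otimes>\<^sub>M mu) (\<lambda>\<omega>. (V \<omega>, A \<omega>))) R
        = ennreal (\<integral>\<omega>. indicator C (V \<omega>) * indicator B (A \<omega>) \<partial>M)"
    proof -
      have "emeasure (distr M (PV \<Otimes>\<^sub>M mu) (\<lambda>\<omega>. (V \<omega>, A \<omega>))) R
          = emeasure M ((\<lambda>\<omega>. (V \<omega>, A \<omega>)) -` R \<inter> space M)"
        by (rule emeasure_distr[OF mVA Rs])
      also have "\<dots> = (\<integral>\<^sup>+ \<omega>. indicator ((\<lambda>\<omega>. (V \<omega>, A \<omega>)) -` R \<inter> space M) \<omega> \<partial>M)"
        by (rule nn_integral_indicator[symmetric]) (rule measurable_sets[OF mVA Rs])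
      also have "\<dots> = (\<integral>\<^sup>+ \<omega>. ennreal (indicator C (V \<omega>) * indicator B (A \<omega>)) \<partial>M)"
        by (rule nn_integral_cong) (auto simp: R indicator_def)
      also have "\<dots> = ennreal (\<integral>\<omega>. indicator C (V \<omega>) * indicator B (A \<omega>) \<partial>M)"
        by (rule nn_integral_eq_integral[OF iprod]) (auto simp: indicator_def)
      finally show ?thesis .
    qed
    have rhs: "emeasure (density (PV \<Otimes>\<^sub>M mu) (\<lambda>(v, a). ennreal (f a v))) R
        = ennreal (\<integral>\<omega>. indicator C (V \<omega>) * ce \<omega> \<partial>M)"
    proof -
      have m4: "(\<lambda>x. (\<lambda>(v, a). ennreal (f a v)) x * indicator R x) \<in> borel_measurable (PV \<Otimes>\<^sub>M mu)"
        using fm3 Rs by measurable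
      have "emeasure (density (PV \<Otimes>\<^sub>M mu) (\<lambda>(v, a). ennreal (f a v))) R
          = (\<integral>\<^sup>+ x. (\<lambda>(v, a). ennreal (f a v)) x * indicator R x \<partial>(PV \<Otimes>\<^sub>M mu))"
        by (rule emeasure_density[OF fm3 Rs])
      also have "\<dots> = (\<integral>\<^sup>+ v. \<integral>\<^sup>+ a. ennreal (f a v) * indicator R (v, a) \<partial>mu \<partial>PV)"
        using mus.nn_integral_fst[OF m4, symmetric] by simp
      also have "\<dots> = (\<integral>\<^sup>+ \<omega>. \<integral>\<^sup>+ a. ennreal (f a (V \<omega>)) * indicator R (V \<omega>, a) \<partial>mu \<partial>M)"
        unfolding PV_def
      proof (rule nn_integral_distr[OF mV])
        have "(\<lambda>v. \<integral>\<^sup>+ a. (\<lambda>(v, a). ennreal (f a v) * indicator R (v, a)) (v, a) \<partial>mu) \<in> borel_measurable PV"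
          by (rule mus.borel_measurable_nn_integral_fst) (use m4 in \<open>simp add: split_beta'\<close>)
        then show "(\<lambda>v. \<integral>\<^sup>+ a. ennreal (f a v) * indicator R (v, a) \<partial>mu) \<in> borel_measurable (distr M MV V)"
          unfolding PV_def by simp
      qed
      also have "\<dots> = (\<integral>\<^sup>+ \<omega>. ennreal (indicator C (V \<omega>) * ce \<omega>) \<partial>M)"
      proof (rule nn_integral_cong_AE)
        show "AE \<omega> in M. (\<integral>\<^sup>+ a. ennreal (f a (V \<omega>)) * indicator R (V \<omega>, a) \<partial>mu) = ennreal (indicator C (V \<omega>) * ce \<omega>)"
          using dens_ae[OF prob mA mV cd B]
        proof eventually_elim
          case (elim \<omega>)
          show ?case
          proof (cases "V \<omega> \<in> C")
            case True
            have "(\<integral>\<^sup>+ a. ennreal (f a (V \<omega>)) * indicator R (V \<omega>, a) \<partial>mu)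
                = (\<integral>\<^sup>+ a. ennreal (indicator B a * f a (V \<omega>)) \<partial>mu)"
              by (rule nn_integral_cong) (use True in \<open>simp add: R indicator_def\<close>)
            then show ?thesis using elim True unfolding ce_def by simp
          next
            case False
            have "(\<integral>\<^sup>+ a. ennreal (f a (V \<omega>)) * indicator R (V \<omega>, a) \<partial>mu) = (\<integral>\<^sup>+ a. 0 \<partial>mu)"
              by (rule nn_integral_cong) (use False in \<open>simp add: R indicator_def\<close>)
            then show ?thesis using False by simp
          qed
        qed
      qed
      also have "\<dots> = ennreal (\<integral>\<omega>. indicator C (V \<omega>) * ce \<omega> \<partial>M)"
        by (rule nn_integral_eq_integral[OF ce1(1)]) (use cepos in \<open>auto simp: indicator_def\<close>)
      finally show ?thesis .
    qed
    show "emeasure (distr M (PV \<Otimes>\<^sub>M mu) (\<lambda>\<omega>. (V \<omega>, A \<omega>))) R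
        = emeasure (density (PV \<Otimes>\<^sub>M mu) (\<lambda>(v, a). ennreal (f a v))) R"
      unfolding lhs rhs ce1(2) ..
  qed
qed

lemma dens_int:
  fixes G :: "'v \<Rightarrow> 'a \<Rightarrow> real"
  assumes prob: "prob_space M" and sf: "sigma_finite_measure mu"
    and mA: "A \<in> measurable M mu" and mV: "V \<in> measurable M MV"
    and cd: "cond_density M mu A V MV f"
    and Gm: "(\<lambda>(v, a). G v a) \<in> borel_measurable (MV \<Otimes>\<^sub>M mu)"
    and Gi: "integrable M (\<lambda>\<omega>. G (V \<omega>) (A \<omega>))"
  shows "AE \<omega> in M. integrable mu (\<lambda>a. f a (V \<omega>) * G (V \<omega>) a)"
    "integrable M (\<lambda>\<omega>. \<integral>a. f a (V \<omega>) * G (V \<omega>) a \<partial>mu)"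
    "(\<integral>\<omega>. G (V \<omega>) (A \<omega>) \<partial>M) = (\<integral>\<omega>. \<integral>a. f a (V \<omega>) * G (V \<omega>) a \<partial>mu \<partial>M)"
proof -
  interpret prob_space M by fact
  define PV where "PV = distr M MV V"
  interpret PVp: prob_space PV unfolding PV_def by (rule prob_space_distr[OF mV])
  interpret mus: sigma_finite_measure mu by fact
  interpret PP: pair_sigma_finite PV mu ..
  have fm: "(\<lambda>(a, v). f a v) \<in> borel_measurable (mu \<Otimes>\<^sub>M MV)"
    and fnn: "\<forall>a\<in>space mu. \<forall>v\<in>space MV. 0 \<le> f a v"
    using cd unfolding cond_density_def by auto
  have setsP: "sets (PV \<Otimes>\<^sub>M mu) = sets (MV \<Otimes>\<^sub>M mu)"
    by (rule sets_pair_measure_cong) (simp_all add: PV_def)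
  have fm2: "(\<lambda>(v, a). f a v) \<in> borel_measurable (MV \<Otimes>\<^sub>M mu)"
  proof -
    have "(\<lambda>x. (\<lambda>(a, v). f a v) ((\<lambda>(x, y). (y, x)) x)) \<in> borel_measurable (MV \<Otimes>\<^sub>M mu)"
      by (rule measurable_compose[OF measurable_pair_swap' fm])
    then show ?thesis by (simp add: split_beta)
  qed
  define g where "g = (\<lambda>x. f (snd x) (fst x))"
  define G' where "G' = (\<lambda>x. G (fst x) (snd x))"
  have gm: "g \<in> borel_measurable (PV \<Otimes>\<^sub>M mu)"
    using fm2 unfolding measurable_cong_sets[OF setsP refl] g_def by (simp add: split_beta')
  have G'm: "G' \<in> borel_measurable (PV \<Otimes>\<^sub>M mu)"
    using Gm unfolding measurable_cong_sets[OF setsP refl] G'_def by (simp add: split_beta')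
  have G'm2: "G' \<in> borel_measurable (MV \<Otimes>\<^sub>M mu)"
    using Gm unfolding G'_def by (simp add: split_beta')
  have mVA: "(\<lambda>\<omega>. (V \<omega>, A \<omega>)) \<in> measurable M (PV \<Otimes>\<^sub>M mu)"
    unfolding measurable_cong_sets[OF refl setsP] using mV mA by measurable
  have dd: "distr M (PV \<Otimes>\<^sub>M mu) (\<lambda>\<omega>. (V \<omega>, A \<omega>)) = density (PV \<Otimes>\<^sub>M mu) (\<lambda>x. ennreal (g x))"
    using dens_distr[OF prob sf mA mV cd] unfolding PV_def g_def by (simp add: split_beta')
  have gnn: "AE x in PV \<Otimes>\<^sub>M mu. 0 \<le> g x"
  proof (rule AE_I2)
    fix x assume "x \<in> space (PV \<Otimes>\<^sub>M mu)"
    then have "fst x \<in> space MV" "snd x \<in> space mu" by (auto simp: space_pair_measure PV_def)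
    then show "0 \<le> g x" using fnn unfolding g_def by auto
  qed
  have i1: "integrable (distr M (PV \<Otimes>\<^sub>M mu) (\<lambda>\<omega>. (V \<omega>, A \<omega>))) G'"
    using integrable_distr_eq[OF mVA G'm] Gi unfolding G'_def by simp
  then have i2: "integrable (PV \<Otimes>\<^sub>M mu) (\<lambda>x. g x * G' x)"
    unfolding dd using integrable_density[OF G'm gm gnn] by simp
  have e1: "(\<integral>\<omega>. G (V \<omega>) (A \<omega>) \<partial>M) = (\<integral>x. G' x \<partial>(distr M (PV \<Otimes>\<^sub>M mu) (\<lambda>\<omega>. (V \<omega>, A \<omega>))))"
    using integral_distr[OF mVA G'm] unfolding G'_def by simp
  also have "\<dots> = (\<integral>x. g x * G' x \<partial>(PV \<Otimes>\<^sub>M mu))"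
    unfolding dd using integral_density[OF G'm gm gnn] by simp
  also have "\<dots> = (\<integral>v. \<integral>a. g (v, a) * G' (v, a) \<partial>mu \<partial>PV)"
    using PP.integral_fst'[OF i2] by simp
  finally have e2: "(\<integral>\<omega>. G (V \<omega>) (A \<omega>) \<partial>M) = (\<integral>v. \<integral>a. f a v * G v a \<partial>mu \<partial>PV)"
    unfolding g_def G'_def by simp
  have ip: "integrable PV (\<lambda>v. \<integral>a. f a v * G v a \<partial>mu)"
    using PP.integrable_fst'[OF i2] unfolding g_def G'_def by simp
  have aep: "AE v in PV. integrable mu (\<lambda>a. f a v * G v a)"
    using PP.AE_integrable_fst'[OF i2] unfolding g_def G'_def by simp
  have im: "(\<lambda>v. \<integral>a. f a v * G v a \<partial>mu) \<in> borel_measurable MV"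
  proof -
    have "(\<lambda>(v, a). f a v * G v a) \<in> borel_measurable (MV \<Otimes>\<^sub>M mu)"
      using fm2 Gm by (simp add: split_beta')
    then show ?thesis by (rule mus.borel_measurable_lebesgue_integral)
  qed
  show "AE \<omega> in M. integrable mu (\<lambda>a. f a (V \<omega>) * G (V \<omega>) a)"
    using AE_distrD[OF mV aep[unfolded PV_def]] .
  show "integrable M (\<lambda>\<omega>. \<integral>a. f a (V \<omega>) * G (V \<omega>) a \<partial>mu)"
    using ip integrable_distr_eq[OF mV im] unfolding PV_def by simp
  show "(\<integral>\<omega>. G (V \<omega>) (A \<omega>) \<partial>M) = (\<integral>\<omega>. \<integral>a. f a (V \<omega>) * G (V \<omega>) a \<partial>mu \<partial>M)"
    using e2 integral_distr[OF mV im] unfolding PV_def by simp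
qed

lemma pos_lemma:
  fixes P :: "'v \<Rightarrow> 'a \<Rightarrow> bool" and M :: "'o measure" and A :: "'o \<Rightarrow> 'a" and V :: "'o \<Rightarrow> 'v"
  assumes prob: "prob_space M" and sf: "sigma_finite_measure mu"
    and mA: "A \<in> measurable M mu" and mU: "U \<in> measurable M MU" and mV: "V \<in> measurable M MV"
    and cdU: "cond_density M mu A U MU fU" and cdV: "cond_density M mu A V MV fV"
    and EQ: "\<And>B C. B \<in> sets mu \<Longrightarrow> C \<in> sets MV \<Longrightarrow>
       (\<integral>\<omega>. indicator C (V \<omega>) * indicator B (A \<omega>) \<partial>M)
       = (\<integral>\<omega>. indicator C (V \<omega>) * real_cond_exp M (sigma_gen M U MU) (\<lambda>\<omega>. indicator B (A \<omega>)) \<omega> \<partial>M)"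
    and Pm: "{x \<in> space (MV \<Otimes>\<^sub>M mu). P (fst x) (snd x)} \<in> sets (MV \<Otimes>\<^sub>M mu)"
    and pos: "\<forall>\<omega>\<in>space M. \<forall>a\<in>space mu. P (V \<omega>) a \<longrightarrow> fU a (U \<omega>) \<noteq> 0"
  shows "AE \<omega> in M. AE a in mu. P (V \<omega>) a \<longrightarrow> fV a (V \<omega>) \<noteq> 0"
proof -
  interpret prob_space M by fact
  interpret SU: sigma_finite_subalgebra M "sigma_gen M U MU" using sg_sfs prob mU by blast
  define PV where "PV = distr M MV V"
  interpret PVp: prob_space PV unfolding PV_def by (rule prob_space_distr[OF mV])
  interpret mus: sigma_finite_measure mu by fact
  interpret PP: pair_sigma_finite PV mu ..
  interpret MM: pair_sigma_finite M mu ..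
  have fUm: "(\<lambda>(a, v). fU a v) \<in> borel_measurable (mu \<Otimes>\<^sub>M MU)"
    and fUnn: "\<forall>a\<in>space mu. \<forall>v\<in>space MU. 0 \<le> fU a v"
    using cdU unfolding cond_density_def by auto
  have fVm: "(\<lambda>(a, v). fV a v) \<in> borel_measurable (mu \<Otimes>\<^sub>M MV)"
    and fVnn: "\<forall>a\<in>space mu. \<forall>v\<in>space MV. 0 \<le> fV a v"
    using cdV unfolding cond_density_def by auto
  have setsP: "sets (PV \<Otimes>\<^sub>M mu) = sets (MV \<Otimes>\<^sub>M mu)"
    by (rule sets_pair_measure_cong) (simp_all add: PV_def)
  have spP: "space (PV \<Otimes>\<^sub>M mu) = space (MV \<Otimes>\<^sub>M mu)"
    by (simp add: space_pair_measure PV_def)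
  have mVA: "(\<lambda>\<omega>. (V \<omega>, A \<omega>)) \<in> measurable M (PV \<Otimes>\<^sub>M mu)"
    unfolding measurable_cong_sets[OF refl setsP] using mV mA by measurable
  define k :: "'o \<times> 'a \<Rightarrow> ennreal" where "k = (\<lambda>x. ennreal (fU (snd x) (U (fst x))))"
  have km: "k \<in> borel_measurable (M \<Otimes>\<^sub>M mu)"
  proof -
    have "(\<lambda>x. (\<lambda>(a, v). fU a v) (snd x, U (fst x))) \<in> borel_measurable (M \<Otimes>\<^sub>M mu)"
      by (rule measurable_compose[OF _ fUm]) (use mU in measurable)
    then show ?thesis unfolding k_def by (simp add: split_beta')
  qed
 define T :: "'o \<times> 'a \<Rightarrow> 'v \<times> 'a" where "T = (\<lambda>x. (V (fst x), snd x))"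
  have Tm: "T \<in> measurable (M \<Otimes>\<^sub>M mu) (PV \<Otimes>\<^sub>M mu)"
    unfolding measurable_cong_sets[OF refl setsP] T_def using mV by measurable
  define nu3 where "nu3 = distr (density (M \<Otimes>\<^sub>M mu) k) (PV \<Otimes>\<^sub>M mu) T"
  have Tm': "T \<in> measurable (density (M \<Otimes>\<^sub>M mu) k) (PV \<Otimes>\<^sub>M mu)"
    using Tm by simp
  have nu3_em: "emeasure nu3 R = (\<integral>\<^sup>+ \<omega>. \<integral>\<^sup>+ a. ennreal (fU a (U \<omega>)) * indicator R (V \<omega>, a) \<partial>mu \<partial>M)"
    if R: "R \<in> sets (PV \<Otimes>\<^sub>M mu)" for R
  proof -
    have pre: "T -` R \<inter> space (M \<Otimes>\<^sub>M mu) \<in> sets (M \<Otimes>\<^sub>M mu)"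
      by (rule measurable_sets[OF Tm R])
    have "emeasure nu3 R = emeasure (density (M \<Otimes>\<^sub>M mu) k) (T -` R \<inter> space (M \<Otimes>\<^sub>M mu))"
      unfolding nu3_def using emeasure_distr[OF Tm' R] by simp
    also have "\<dots> = (\<integral>\<^sup>+ x. k x * indicator (T -` R \<inter> space (M \<Otimes>\<^sub>M mu)) x \<partial>(M \<Otimes>\<^sub>M mu))"
      by (rule emeasure_density[OF km pre])
    also have "\<dots> = (\<integral>\<^sup>+ \<omega>. \<integral>\<^sup>+ a. k (\<omega>, a) * indicator (T -` R \<inter> space (M \<Otimes>\<^sub>M mu)) (\<omega>, a) \<partial>mu \<partial>M)"
      by (rule mus.nn_integral_fst[symmetric]) (use km pre in measurable)
    also have "\<dots> = (\<integral>\<^sup>+ \<omega>. \<integral>\<^sup>+ a. ennreal (fU a (U \<omega>)) * indicator R (V \<omega>, a) \<partial>mu \<partial>M)"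
    proof (rule nn_integral_cong)
      fix \<omega> assume "\<omega> \<in> space M"
      then show "(\<integral>\<^sup>+ a. k (\<omega>, a) * indicator (T -` R \<inter> space (M \<Otimes>\<^sub>M mu)) (\<omega>, a) \<partial>mu)
          = (\<integral>\<^sup>+ a. ennreal (fU a (U \<omega>)) * indicator R (V \<omega>, a) \<partial>mu)"
        by (intro nn_integral_cong) (simp add: k_def T_def indicator_def space_pair_measure)
    qed
    finally show ?thesis .
  qed
  have eqm: "distr M (PV \<Otimes>\<^sub>M mu) (\<lambda>\<omega>. (V \<omega>, A \<omega>)) = nu3"
  proof -
    define \<Omega> where "\<Omega> = space MV \<times> space mu"
    define E where "E = {C \<times> B | C B. C \<in> sets MV \<and> B \<in> sets mu}"
    show ?thesis
    proof (rule measure_eqI_generator_eq[where E=E and \<Omega>=\<Omega> and A="\<lambda>_. \<Omega>"])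
      show "Int_stable E" unfolding E_def by (rule Int_stable_pair_measure_generator)
      show "E \<subseteq> Pow \<Omega>"
      proof
        fix x assume "x \<in> E"
        then obtain C B where "x = C \<times> B" "C \<in> sets MV" "B \<in> sets mu" unfolding E_def by auto
        then show "x \<in> Pow \<Omega>" unfolding \<Omega>_def using sets.sets_into_space[of C MV] sets.sets_into_space[of B mu] by auto
      qed
      show "sets (distr M (PV \<Otimes>\<^sub>M mu) (\<lambda>\<omega>. (V \<omega>, A \<omega>))) = sigma_sets \<Omega> E"
        unfolding E_def \<Omega>_def by (simp add: setsP sets_pair_measure PV_def)
      show "sets nu3 = sigma_sets \<Omega> E"
        unfolding E_def \<Omega>_def nu3_def by (simp add: setsP sets_pair_measure PV_def)
      show "range (\<lambda>_. \<Omega>) \<subseteq> E" unfolding E_def \<Omega>_def by auto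
      show "(\<Union>i. \<Omega>) = \<Omega>" by simp
      show "emeasure (distr M (PV \<Otimes>\<^sub>M mu) (\<lambda>\<omega>. (V \<omega>, A \<omega>))) \<Omega> \<noteq> \<infinity>" for i :: nat
      proof -
        interpret D: prob_space "distr M (PV \<Otimes>\<^sub>M mu) (\<lambda>\<omega>. (V \<omega>, A \<omega>))"
          by (rule prob_space_distr[OF mVA])
        show ?thesis by simp
      qed
    next
      fix R assume "R \<in> E"
      then obtain C B where R: "R = C \<times> B" and C: "C \<in> sets MV" and B: "B \<in> sets mu"
        unfolding E_def by auto
      have Rs: "R \<in> sets (PV \<Otimes>\<^sub>M mu)" unfolding R setsP using C B by simp
      define ce where "ce = real_cond_exp M (sigma_gen M U MU) (\<lambda>\<omega>. indicator B (A \<omega>))"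
      have iBm: "(\<lambda>\<omega>. indicator B (A \<omega>) :: real) \<in> borel_measurable M"
        using mA B by measurable
      have iCm': "(\<lambda>\<omega>. indicator C (V \<omega>) :: real) \<in> borel_measurable M"
        using mV C by measurable
      have iprod: "integrable M (\<lambda>\<omega>. indicator C (V \<omega>) * indicator B (A \<omega>) :: real)"
      proof (rule Bochner_Integration.integrable_bound[of _ "\<lambda>_. 1::real"])
        show "integrable M (\<lambda>_. 1::real)" by simp
        show "(\<lambda>\<omega>. indicator C (V \<omega>) * indicator B (A \<omega>) :: real) \<in> borel_measurable M"
          using iCm' iBm by (rule borel_measurable_times)
        show "AE \<omega> in M. norm (indicator C (V \<omega>) * indicator B (A \<omega>) :: real) \<le> norm (1::real)"
          by (auto simp: indicator_def)
      qed
      have iBi: "integrable M (\<lambda>\<omega>. indicator B (A \<omega>) :: real)"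
      proof (rule Bochner_Integration.integrable_bound[of _ "\<lambda>_. 1::real"])
        show "integrable M (\<lambda>_. 1::real)" by simp
        show "(\<lambda>\<omega>. indicator B (A \<omega>) :: real) \<in> borel_measurable M" by (rule iBm)
        show "AE \<omega> in M. norm (indicator B (A \<omega>) :: real) \<le> norm (1::real)"
          by (auto simp: indicator_def)
      qed
      have ceint: "integrable M ce"
        unfolding ce_def by (rule SU.real_cond_exp_int(1)[OF iBi])
      have ce1: "integrable M (\<lambda>\<omega>. indicator C (V \<omega>) * ce \<omega>)"
      proof -
        have pre: "V -` C \<inter> space M \<in> sets M" by (rule measurable_sets[OF mV C])
        have i0: "integrable M (\<lambda>\<omega>. indicator (V -` C \<inter> space M) \<omega> *\<^sub>R ce \<omega>)"
          by (rule integrable_mult_indicator[OF pre ceint])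
        have "integrable M (\<lambda>\<omega>. indicator (V -` C \<inter> space M) \<omega> *\<^sub>R ce \<omega>) \<longleftrightarrow> integrable M (\<lambda>\<omega>. indicator C (V \<omega>) * ce \<omega>)"
          by (rule Bochner_Integration.integrable_cong) (simp_all add: indicator_def)
        then show ?thesis using i0 by simp
      qed
      have cepos: "AE \<omega> in M. 0 \<le> ce \<omega>"
        unfolding ce_def by (rule SU.real_cond_exp_pos) (use iBm in auto)
      have lhs: "emeasure (distr M (PV \<Otimes>\<^sub>M mu) (\<lambda>\<omega>. (V \<omega>, A \<omega>))) R
          = ennreal (\<integral>\<omega>. indicator C (V \<omega>) * indicator B (A \<omega>) \<partial>M)"
      proof -
        have "emeasure (distr M (PV \<Otimes>\<^sub>M mu) (\<lambda>\<omega>. (V \<omega>, A \<omega>))) R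
            = emeasure M ((\<lambda>\<omega>. (V \<omega>, A \<omega>)) -` R \<inter> space M)"
          by (rule emeasure_distr[OF mVA Rs])
        also have "\<dots> = (\<integral>\<^sup>+ \<omega>. indicator ((\<lambda>\<omega>. (V \<omega>, A \<omega>)) -` R \<inter> space M) \<omega> \<partial>M)"
          by (rule nn_integral_indicator[symmetric]) (rule measurable_sets[OF mVA Rs])
        also have "\<dots> = (\<integral>\<^sup>+ \<omega>. ennreal (indicator C (V \<omega>) * indicator B (A \<omega>)) \<partial>M)"
          by (rule nn_integral_cong) (auto simp: R indicator_def)
        also have "\<dots> = ennreal (\<integral>\<omega>. indicator C (V \<omega>) * indicator B (A \<omega>) \<partial>M)"
          by (rule nn_integral_eq_integral[OF iprod]) (auto simp: indicator_def)
        finally show ?thesis .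
      qed
      have rhs: "emeasure nu3 R = ennreal (\<integral>\<omega>. indicator C (V \<omega>) * ce \<omega> \<partial>M)"
      proof -
        have "emeasure nu3 R = (\<integral>\<^sup>+ \<omega>. \<integral>\<^sup>+ a. ennreal (fU a (U \<omega>)) * indicator R (V \<omega>, a) \<partial>mu \<partial>M)"
          by (rule nu3_em[OF Rs])
        also have "\<dots> = (\<integral>\<^sup>+ \<omega>. ennreal (indicator C (V \<omega>) * ce \<omega>) \<partial>M)"
        proof (rule nn_integral_cong_AE)
          show "AE \<omega> in M. (\<integral>\<^sup>+ a. ennreal (fU a (U \<omega>)) * indicator R (V \<omega>, a) \<partial>mu) = ennreal (indicator C (V \<omega>) * ce \<omega>)"
            using dens_ae[OF prob mA mU cdU B]
          proof eventually_elim
            case (elim \<omega>)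
            show ?case
            proof (cases "V \<omega> \<in> C")
              case True
              have "(\<integral>\<^sup>+ a. ennreal (fU a (U \<omega>)) * indicator R (V \<omega>, a) \<partial>mu)
                  = (\<integral>\<^sup>+ a. ennreal (indicator B a * fU a (U \<omega>)) \<partial>mu)"
                by (rule nn_integral_cong) (use True in \<open>simp add: R indicator_def\<close>)
              then show ?thesis using elim True unfolding ce_def by simp
            next
              case False
              have "(\<integral>\<^sup>+ a. ennreal (fU a (U \<omega>)) * indicator R (V \<omega>, a) \<partial>mu) = (\<integral>\<^sup>+ a. 0 \<partial>mu)"
                by (rule nn_integral_cong) (use False in \<open>simp add: R indicator_def\<close>)
              then show ?thesis using False by simp
            qed
          qed
        qed
        also have "\<dots> = ennreal (\<integral>\<omega>. indicator C (V \<omega>) * ce \<omega> \<partial>M)"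
          by (rule nn_integral_eq_integral[OF ce1]) (use cepos in \<open>auto simp: indicator_def\<close>)
        finally show ?thesis .
      qed
      show "emeasure (distr M (PV \<Otimes>\<^sub>M mu) (\<lambda>\<omega>. (V \<omega>, A \<omega>))) R = emeasure nu3 R"
        unfolding lhs rhs ce_def EQ[OF B C] ..
    qed
  qed
  define N where "N = {x \<in> space (MV \<Otimes>\<^sub>M mu). P (fst x) (snd x) \<and> fV (snd x) (fst x) = 0}"
  have fVm2: "(\<lambda>x. fV (snd x) (fst x)) \<in> borel_measurable (MV \<Otimes>\<^sub>M mu)"
  proof -
    have "(\<lambda>x. (\<lambda>(a, v). fV a v) ((\<lambda>(x, y). (y, x)) x)) \<in> borel_measurable (MV \<Otimes>\<^sub>M mu)"
      by (rule measurable_compose[OF measurable_pair_swap' fVm])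
    then show ?thesis by (simp add: split_beta)
  qed
  have Ns: "N \<in> sets (MV \<Otimes>\<^sub>M mu)"
  proof -
    have "{x \<in> space (MV \<Otimes>\<^sub>M mu). fV (snd x) (fst x) = 0} \<in> sets (MV \<Otimes>\<^sub>M mu)"
      using fVm2 by measurable
    then have "{x \<in> space (MV \<Otimes>\<^sub>M mu). P (fst x) (snd x)} \<inter> {x \<in> space (MV \<Otimes>\<^sub>M mu). fV (snd x) (fst x) = 0} \<in> sets (MV \<Otimes>\<^sub>M mu)"
      using Pm by (rule sets.Int[rotated])
    moreover have "N = {x \<in> space (MV \<Otimes>\<^sub>M mu). P (fst x) (snd x)} \<inter> {x \<in> space (MV \<Otimes>\<^sub>M mu). fV (snd x) (fst x) = 0}"
      unfolding N_def by auto
    ultimately show ?thesis by simp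
  qed
  have NsP: "N \<in> sets (PV \<Otimes>\<^sub>M mu)" using Ns setsP by simp
  have "emeasure (distr M (PV \<Otimes>\<^sub>M mu) (\<lambda>\<omega>. (V \<omega>, A \<omega>))) N = 0"
  proof -
    have dd: "distr M (PV \<Otimes>\<^sub>M mu) (\<lambda>\<omega>. (V \<omega>, A \<omega>)) = density (PV \<Otimes>\<^sub>M mu) (\<lambda>(v, a). ennreal (fV a v))"
      using dens_distr[OF prob sf mA mV cdV] unfolding PV_def .
    have gm: "(\<lambda>(v, a). ennreal (fV a v)) \<in> borel_measurable (PV \<Otimes>\<^sub>M mu)"
      using fVm2 unfolding measurable_cong_sets[OF setsP refl] by (simp add: split_beta')
    have "emeasure (density (PV \<Otimes>\<^sub>M mu) (\<lambda>(v, a). ennreal (fV a v))) N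
        = (\<integral>\<^sup>+ x. (\<lambda>(v, a). ennreal (fV a v)) x * indicator N x \<partial>(PV \<Otimes>\<^sub>M mu))"
      by (rule emeasure_density[OF gm NsP])
    also have "\<dots> = (\<integral>\<^sup>+ x. 0 \<partial>(PV \<Otimes>\<^sub>M mu))"
      by (rule nn_integral_cong) (auto simp: N_def indicator_def split_beta')
    finally show ?thesis using dd by simp
  qed
  then have "(\<integral>\<^sup>+ \<omega>. \<integral>\<^sup>+ a. ennreal (fU a (U \<omega>)) * indicator N (V \<omega>, a) \<partial>mu \<partial>M) = 0"
    using nu3_em[OF NsP] eqm by simp
  then have ae1: "AE \<omega> in M. (\<integral>\<^sup>+ a. ennreal (fU a (U \<omega>)) * indicator N (V \<omega>, a) \<partial>mu) = 0"
  proof (subst (asm) nn_integral_0_iff_AE)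
    have "(\<lambda>(\<omega>, a). ennreal (fU a (U \<omega>)) * indicator N (V \<omega>, a)) \<in> borel_measurable (M \<Otimes>\<^sub>M mu)"
    proof -
      have "(\<lambda>x. k x * indicator N (T x)) \<in> borel_measurable (M \<Otimes>\<^sub>M mu)"
        using km Tm NsP by measurable
      then show ?thesis by (simp add: k_def T_def split_beta')
    qed
    then show "(\<lambda>\<omega>. \<integral>\<^sup>+ a. ennreal (fU a (U \<omega>)) * indicator N (V \<omega>, a) \<partial>mu) \<in> borel_measurable M"
      by (rule mus.borel_measurable_nn_integral)
  qed
  show ?thesis
    using ae1 AE_space
  proof eventually_elim
    case (elim \<omega>)
    have Us: "U \<omega> \<in> space MU" and Vs: "V \<omega> \<in> space MV"
      using elim mU mV by (auto simp: measurable_def)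
    have m5: "(\<lambda>a. ennreal (fU a (U \<omega>)) * indicator N (V \<omega>, a)) \<in> borel_measurable mu"
    proof -
      have "(\<lambda>a. (\<lambda>(a, v). fU a v) (a, U \<omega>)) \<in> borel_measurable mu"
        by (rule measurable_compose[OF measurable_Pair2'[OF Us] fUm])
      moreover have "(\<lambda>a. indicator N (V \<omega>, a) :: ennreal) \<in> borel_measurable mu"
        using measurable_Pair1'[OF Vs, of mu] Ns by measurable
      ultimately show ?thesis by simp
    qed
    have "AE a in mu. ennreal (fU a (U \<omega>)) * indicator N (V \<omega>, a) = 0"
      using elim(1) nn_integral_0_iff_AE[OF m5] by simp
    then show ?case
    proof (rule AE_mp[OF _ AE_I2[OF impI]])
      fix a assume a: "a \<in> space mu" and z: "ennreal (fU a (U \<omega>)) * indicator N (V \<omega>, a) = 0"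
      show "P (V \<omega>) a \<longrightarrow> fV a (V \<omega>) \<noteq> 0"
      proof
        assume Pa: "P (V \<omega>) a"
        have fpos: "0 < fU a (U \<omega>)" using pos elim(2) a Pa fUnn Us
          by (metis order_le_less)
        show "fV a (V \<omega>) \<noteq> 0"
        proof
          assume "fV a (V \<omega>) = 0"
          then have "(V \<omega>, a) \<in> N" unfolding N_def using Pa a Vs by (simp add: space_pair_measure)
          then show False using z fpos by simp
        qed
      qed
    qed
  qed
qed

lemma ind_int:
  assumes "prob_space M" "(\<lambda>\<omega>. g \<omega> :: real) \<in> borel_measurable M" "\<And>\<omega>. \<bar>g \<omega>\<bar> \<le> 1"
  shows "integrable M g"
proof -
  interpret prob_space M by fact
  show ?thesis
  proof (rule Bochner_Integration.integrable_bound[of _ "\<lambda>_. 1::real"])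
    show "integrable M (\<lambda>_. 1::real)" by simp
    show "g \<in> borel_measurable M" using assms(2) by simp
    show "AE \<omega> in M. norm (g \<omega>) \<le> norm (1::real)" using assms(3) by auto
  qed
qed

lemma bdd_mult_int:
  fixes g h :: "_ \<Rightarrow> real"
  assumes "integrable M h" "g \<in> borel_measurable M" "\<And>\<omega>. \<bar>g \<omega>\<bar> \<le> 1"
  shows "integrable M (\<lambda>\<omega>. g \<omega> * h \<omega>)"
proof (rule Bochner_Integration.integrable_bound[of _ "\<lambda>\<omega>. \<bar>h \<omega>\<bar>"])
  show "integrable M (\<lambda>\<omega>. \<bar>h \<omega>\<bar>)" using assms(1) by simp
  show "(\<lambda>\<omega>. g \<omega> * h \<omega>) \<in> borel_measurable M" using assms(1,2) by measurable
  show "AE \<omega> in M. norm (g \<omega> * h \<omega>) \<le> norm \<bar>h \<omega>\<bar>"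
  proof (rule AE_I2)
    fix \<omega>
    have "\<bar>g \<omega>\<bar> * \<bar>h \<omega>\<bar> \<le> 1 * \<bar>h \<omega>\<bar>" by (rule mult_right_mono[OF assms(3)]) simp
    then show "norm (g \<omega> * h \<omega>) \<le> norm \<bar>h \<omega>\<bar>" by (simp add: abs_mult)
  qed
qed

lemma ci_rect:
  fixes M :: "'o measure" and A :: "'o \<Rightarrow> 'a" and Yv :: "'o \<Rightarrow> real"
  assumes prob: "prob_space M"
    and mA: "A \<in> measurable M mu" and mU: "U \<in> measurable M MU" and mX: "X \<in> measurable M MX"
    and mW: "W \<in> measurable M MW" and mZ: "Z \<in> measurable M MZ" and mY: "Yv \<in> borel_measurable M"
    and ci: "cond_indep M (\<lambda>\<omega>. (Z \<omega>, A \<omega>)) (MZ \<Otimes>\<^sub>M mu) (\<lambda>\<omega>. (Yv \<omega>, W \<omega>)) (borel \<Otimes>\<^sub>M MW)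
               (\<lambda>\<omega>. (U \<omega>, X \<omega>)) (MU \<Otimes>\<^sub>M MX)"
    and B: "B \<in> sets mu" and C1: "C1 \<in> sets MW" and C2: "C2 \<in> sets MX"
  shows "(\<integral>\<omega>. indicator C1 (W \<omega>) * indicator C2 (X \<omega>) * indicator B (A \<omega>) \<partial>M)
     = (\<integral>\<omega>. indicator C1 (W \<omega>) * indicator C2 (X \<omega>) *
          real_cond_exp M (sigma_gen M (\<lambda>\<omega>. (U \<omega>, X \<omega>)) (MU \<Otimes>\<^sub>M MX)) (\<lambda>\<omega>. indicator B (A \<omega>)) \<omega> \<partial>M)"
proof -
  interpret prob_space M by fact
  define F where "F = sigma_gen M (\<lambda>\<omega>. (U \<omega>, X \<omega>)) (MU \<Otimes>\<^sub>M MX)"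
  have mUX: "(\<lambda>\<omega>. (U \<omega>, X \<omega>)) \<in> measurable M (MU \<Otimes>\<^sub>M MX)" using mU mX by measurable
  interpret S: sigma_finite_subalgebra M F unfolding F_def using sg_sfs prob mUX by blast
  define iB where "iB = (\<lambda>\<omega>. indicator B (A \<omega>) :: real)"
  define iW where "iW = (\<lambda>\<omega>. indicator C1 (W \<omega>) :: real)"
  define iX where "iX = (\<lambda>\<omega>. indicator C2 (X \<omega>) :: real)"
  define ce where "ce = real_cond_exp M F iB"
  have iBm: "iB \<in> borel_measurable M" unfolding iB_def using mA B by measurable
  have iWm: "iW \<in> borel_measurable M" unfolding iW_def using mW C1 by measurable
  have iXm: "iX \<in> borel_measurable M" unfolding iX_def using mX C2 by measurable
  have iXF: "iX \<in> borel_measurable F"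
  proof -
    have "(\<lambda>\<omega>. (\<lambda>p. indicator C2 (snd p) :: real) (U \<omega>, X \<omega>)) \<in> borel_measurable F"
      unfolding F_def by (rule sg_meas[OF mUX]) (use C2 in measurable)
    then show ?thesis unfolding iX_def by simp
  qed
  have bB: "\<bar>iB \<omega>\<bar> \<le> 1" "\<bar>iW \<omega>\<bar> \<le> 1" "\<bar>iX \<omega>\<bar> \<le> 1" for \<omega>
    unfolding iB_def iW_def iX_def by (auto simp: indicator_def)
  have iBi: "integrable M iB" by (rule ind_int[OF prob iBm bB(1)])
  have iWi: "integrable M iW" by (rule ind_int[OF prob iWm bB(2)])
  have ceI: "integrable M ce" unfolding ce_def by (rule S.real_cond_exp_int(1)[OF iBi])
  have ceF: "ce \<in> borel_measurable F" unfolding ce_def by simp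
  have ceM: "ce \<in> borel_measurable M" unfolding ce_def by simp
  obtain \<omega>0 where "\<omega>0 \<in> space M" using not_empty by auto
  then have a0: "A \<omega>0 \<in> space mu" using mA by (auto simp: measurable_def)
  have cond: "AE \<omega> in M. real_cond_exp M F (\<lambda>\<omega>. iB \<omega> * iW \<omega>) \<omega> = ce \<omega> * real_cond_exp M F iW \<omega>"
  proof -
    have B': "space MZ \<times> B \<in> sets (MZ \<Otimes>\<^sub>M mu)" using B by simp
    have C': "UNIV \<times> C1 \<in> sets (borel \<Otimes>\<^sub>M MW)" using C1 by simp
    note ci' = ci[unfolded cond_indep_def, rule_format, OF B' C', folded F_def]
    have e1: "AE \<omega> in M. real_cond_exp M F (\<lambda>\<omega>. indicator (space MZ \<times> B) (Z \<omega>, A \<omega>) * indicator (UNIV \<times> C1) (Yv \<omega>, W \<omega>)) \<omega>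
        = real_cond_exp M F (\<lambda>\<omega>. iB \<omega> * iW \<omega>) \<omega>"
    proof (rule S.real_cond_exp_cong)
      show "AE \<omega> in M. indicator (space MZ \<times> B) (Z \<omega>, A \<omega>) * indicator (UNIV \<times> C1) (Yv \<omega>, W \<omega>) = iB \<omega> * (iW \<omega> :: real)"
        using mZ by (auto simp: iB_def iW_def indicator_def measurable_def intro!: AE_I2)
      show "(\<lambda>\<omega>. indicator (space MZ \<times> B) (Z \<omega>, A \<omega>) * indicator (UNIV \<times> C1) (Yv \<omega>, W \<omega>) :: real) \<in> borel_measurable M"
        using mZ mA mY mW B' C' by measurable
      show "(\<lambda>\<omega>. iB \<omega> * iW \<omega>) \<in> borel_measurable M" using iBm iWm by measurable
    qed
    have e2: "AE \<omega> in M. real_cond_exp M F (\<lambda>\<omega>. indicator (space MZ \<times> B) (Z \<omega>, A \<omega>)) \<omega> = ce \<omega>"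
      unfolding ce_def
    proof (rule S.real_cond_exp_cong)
      show "AE \<omega> in M. indicator (space MZ \<times> B) (Z \<omega>, A \<omega>) = (iB \<omega> :: real)"
        using mZ by (auto simp: iB_def indicator_def measurable_def intro!: AE_I2)
      show "(\<lambda>\<omega>. indicator (space MZ \<times> B) (Z \<omega>, A \<omega>) :: real) \<in> borel_measurable M"
        using mZ mA B' by measurable
    qed (rule iBm)
    have e3: "AE \<omega> in M. real_cond_exp M F (\<lambda>\<omega>. indicator (UNIV \<times> C1) (Yv \<omega>, W \<omega>)) \<omega> = real_cond_exp M F iW \<omega>"
    proof (rule S.real_cond_exp_cong)
      show "AE \<omega> in M. indicator (UNIV \<times> C1) (Yv \<omega>, W \<omega>) = (iW \<omega> :: real)"
        by (auto simp: iW_def indicator_def intro!: AE_I2)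
      show "(\<lambda>\<omega>. indicator (UNIV \<times> C1) (Yv \<omega>, W \<omega>) :: real) \<in> borel_measurable M"
        using mY mW C' by measurable
    qed (rule iWm)
    show ?thesis using ci' e1 e2 e3 by eventually_elim simp
  qed
  have i1: "integrable M (\<lambda>\<omega>. iX \<omega> * (iB \<omega> * iW \<omega>))"
  proof (rule ind_int[OF prob])
    show "(\<lambda>\<omega>. iX \<omega> * (iB \<omega> * iW \<omega>)) \<in> borel_measurable M" using iXm iBm iWm by measurable
    fix \<omega>
    have h1: "\<bar>iB \<omega> * iW \<omega>\<bar> \<le> 1" unfolding abs_mult by (rule mult_le_one[OF bB(1) abs_ge_zero bB(2)])
    show "\<bar>iX \<omega> * (iB \<omega> * iW \<omega>)\<bar> \<le> 1" unfolding abs_mult[of "iX \<omega>"]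
      by (rule mult_le_one[OF bB(3) abs_ge_zero h1])
  qed
  have iBWm: "(\<lambda>\<omega>. iB \<omega> * iW \<omega>) \<in> borel_measurable M" using iBm iWm by measurable
  have step1: "(\<integral>\<omega>. iX \<omega> * real_cond_exp M F (\<lambda>\<omega>. iB \<omega> * iW \<omega>) \<omega> \<partial>M) = (\<integral>\<omega>. iX \<omega> * (iB \<omega> * iW \<omega>) \<partial>M)"
    by (rule S.real_cond_exp_intg(2)[OF i1 iXF iBWm])
  have step2: "(\<integral>\<omega>. iX \<omega> * real_cond_exp M F (\<lambda>\<omega>. iB \<omega> * iW \<omega>) \<omega> \<partial>M)
      = (\<integral>\<omega>. (iX \<omega> * ce \<omega>) * real_cond_exp M F iW \<omega> \<partial>M)"
    by (rule integral_cong_AE) (use cond iXm ceM in auto)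
  have iXce: "integrable M (\<lambda>\<omega>. iX \<omega> * ce \<omega>)" by (rule bdd_mult_int[OF ceI iXm bB(3)])
  have i2: "integrable M (\<lambda>\<omega>. (iX \<omega> * ce \<omega>) * iW \<omega>)"
  proof -
    have "integrable M (\<lambda>\<omega>. iW \<omega> * (iX \<omega> * ce \<omega>))" by (rule bdd_mult_int[OF iXce iWm bB(2)])
    then show ?thesis by (simp add: mult.commute)
  qed
  have iXceF: "(\<lambda>\<omega>. iX \<omega> * ce \<omega>) \<in> borel_measurable F" using iXF ceF by measurable
  have step3: "(\<integral>\<omega>. (iX \<omega> * ce \<omega>) * real_cond_exp M F iW \<omega> \<partial>M) = (\<integral>\<omega>. (iX \<omega> * ce \<omega>) * iW \<omega> \<partial>M)"
    by (rule S.real_cond_exp_intg(2)[OF i2 iXceF iWm])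
  have "(\<integral>\<omega>. iX \<omega> * (iB \<omega> * iW \<omega>) \<partial>M) = (\<integral>\<omega>. (iX \<omega> * ce \<omega>) * iW \<omega> \<partial>M)"
    using step1 step2 step3 by simp
  then show ?thesis unfolding F_def[symmetric]
    by (simp add: iB_def iW_def iX_def ce_def ac_simps)
qed

lemma em_dd:
  fixes g :: "_ \<Rightarrow> real"
  assumes prob: "prob_space M" and mV: "V \<in> measurable M N" and gi: "integrable M g"
    and gnn: "AE \<omega> in M. 0 \<le> g \<omega>" and C: "C \<in> sets N"
  shows "emeasure (distr (density M (\<lambda>\<omega>. ennreal (g \<omega>))) N V) C = ennreal (\<integral>\<omega>. indicator C (V \<omega>) * g \<omega> \<partial>M)"
proof -
  interpret prob_space M by fact
  have gm: "g \<in> borel_measurable M" using gi by auto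
  have mV': "V \<in> measurable (density M (\<lambda>\<omega>. ennreal (g \<omega>))) N" using mV by simp
  have pre: "V -` C \<inter> space M \<in> sets M" by (rule measurable_sets[OF mV C])
  have iCm: "(\<lambda>\<omega>. indicator C (V \<omega>) :: real) \<in> borel_measurable M" using mV C by measurable
  have ii: "integrable M (\<lambda>\<omega>. indicator C (V \<omega>) * g \<omega>)"
    by (rule bdd_mult_int[OF gi iCm]) (auto simp: indicator_def)
  have "emeasure (distr (density M (\<lambda>\<omega>. ennreal (g \<omega>))) N V) C
      = emeasure (density M (\<lambda>\<omega>. ennreal (g \<omega>))) (V -` C \<inter> space M)"
    using emeasure_distr[OF mV' C] by simp
  also have "\<dots> = (\<integral>\<^sup>+ \<omega>. ennreal (g \<omega>) * indicator (V -` C \<inter> space M) \<omega> \<partial>M)"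
    by (rule emeasure_density) (use gm pre in auto)
  also have "\<dots> = (\<integral>\<^sup>+ \<omega>. ennreal (indicator C (V \<omega>) * g \<omega>) \<partial>M)"
    by (rule nn_integral_cong) (simp add: indicator_def)
  also have "\<dots> = ennreal (\<integral>\<omega>. indicator C (V \<omega>) * g \<omega> \<partial>M)"
    by (rule nn_integral_eq_integral[OF ii]) (use gnn in \<open>auto simp: indicator_def\<close>)
  finally show ?thesis .
qed

lemma ci_eq:
  fixes M :: "'o measure" and A :: "'o \<Rightarrow> 'a" and Yv :: "'o \<Rightarrow> real"
  assumes prob: "prob_space M"
    and mA: "A \<in> measurable M mu" and mU: "U \<in> measurable M MU" and mX: "X \<in> measurable M MX"
    and mW: "W \<in> measurable M MW" and mZ: "Z \<in> measurable M MZ" and mY: "Yv \<in> borel_measurable M"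
    and ci: "cond_indep M (\<lambda>\<omega>. (Z \<omega>, A \<omega>)) (MZ \<Otimes>\<^sub>M mu) (\<lambda>\<omega>. (Yv \<omega>, W \<omega>)) (borel \<Otimes>\<^sub>M MW)
               (\<lambda>\<omega>. (U \<omega>, X \<omega>)) (MU \<Otimes>\<^sub>M MX)"
    and B: "B \<in> sets mu" and C: "C \<in> sets (MW \<Otimes>\<^sub>M MX)"
  shows "(\<integral>\<omega>. indicator C (W \<omega>, X \<omega>) * indicator B (A \<omega>) \<partial>M)
     = (\<integral>\<omega>. indicator C (W \<omega>, X \<omega>) *
          real_cond_exp M (sigma_gen M (\<lambda>\<omega>. (U \<omega>, X \<omega>)) (MU \<Otimes>\<^sub>M MX)) (\<lambda>\<omega>. indicator B (A \<omega>)) \<omega> \<partial>M)"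
proof -
  interpret prob_space M by fact
  define F where "F = sigma_gen M (\<lambda>\<omega>. (U \<omega>, X \<omega>)) (MU \<Otimes>\<^sub>M MX)"
  have mUX: "(\<lambda>\<omega>. (U \<omega>, X \<omega>)) \<in> measurable M (MU \<Otimes>\<^sub>M MX)" using mU mX by measurable
  have mV: "(\<lambda>\<omega>. (W \<omega>, X \<omega>)) \<in> measurable M (MW \<Otimes>\<^sub>M MX)" using mW mX by measurable
  interpret S: sigma_finite_subalgebra M F unfolding F_def using sg_sfs prob mUX by blast
  define iB where "iB = (\<lambda>\<omega>. indicator B (A \<omega>) :: real)"
  define ce where "ce = real_cond_exp M F iB"
  have iBm: "iB \<in> borel_measurable M" unfolding iB_def using mA B by measurable
  have iBi: "integrable M iB" by (rule ind_int[OF prob iBm]) (auto simp: iB_def indicator_def)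
  have ceI: "integrable M ce" unfolding ce_def by (rule S.real_cond_exp_int(1)[OF iBi])
  have cenn: "AE \<omega> in M. 0 \<le> ce \<omega>" unfolding ce_def
    by (rule S.real_cond_exp_pos) (use iBm in \<open>auto simp: iB_def\<close>)
  have iBnn: "AE \<omega> in M. 0 \<le> iB \<omega>" by (auto simp: iB_def)
  define r1 where "r1 = distr (density M (\<lambda>\<omega>. ennreal (iB \<omega>))) (MW \<Otimes>\<^sub>M MX) (\<lambda>\<omega>. (W \<omega>, X \<omega>))"
  define r2 where "r2 = distr (density M (\<lambda>\<omega>. ennreal (ce \<omega>))) (MW \<Otimes>\<^sub>M MX) (\<lambda>\<omega>. (W \<omega>, X \<omega>))"
  have r1e: "emeasure r1 D = ennreal (\<integral>\<omega>. indicator D (W \<omega>, X \<omega>) * iB \<omega> \<partial>M)" if "D \<in> sets (MW \<Otimes>\<^sub>M MX)" for D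
    unfolding r1_def by (rule em_dd[OF prob mV iBi iBnn that])
  have r2e: "emeasure r2 D = ennreal (\<integral>\<omega>. indicator D (W \<omega>, X \<omega>) * ce \<omega> \<partial>M)" if "D \<in> sets (MW \<Otimes>\<^sub>M MX)" for D
    unfolding r2_def by (rule em_dd[OF prob mV ceI cenn that])
  have "r1 = r2"
  proof -
    define \<Omega> where "\<Omega> = space MW \<times> space MX"
    define E where "E = {C1 \<times> C2 | C1 C2. C1 \<in> sets MW \<and> C2 \<in> sets MX}"
    show ?thesis
    proof (rule measure_eqI_generator_eq[where E=E and \<Omega>=\<Omega> and A="\<lambda>_. \<Omega>"])
      show "Int_stable E" unfolding E_def by (rule Int_stable_pair_measure_generator)
      show "E \<subseteq> Pow \<Omega>"
      proof
        fix x assume "x \<in> E"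
        then obtain C1 C2 where "x = C1 \<times> C2" "C1 \<in> sets MW" "C2 \<in> sets MX" unfolding E_def by auto
        then show "x \<in> Pow \<Omega>" unfolding \<Omega>_def using sets.sets_into_space[of C1 MW] sets.sets_into_space[of C2 MX] by auto
      qed
      show "sets r1 = sigma_sets \<Omega> E" unfolding E_def \<Omega>_def r1_def by (simp add: sets_pair_measure)
      show "sets r2 = sigma_sets \<Omega> E" unfolding E_def \<Omega>_def r2_def by (simp add: sets_pair_measure)
      show "range (\<lambda>_. \<Omega>) \<subseteq> E" unfolding E_def \<Omega>_def by auto
      show "(\<Union>i. \<Omega>) = \<Omega>" by simp
      show "emeasure r1 \<Omega> \<noteq> \<infinity>" for i :: nat
      proof -
        have "\<Omega> \<in> sets (MW \<Otimes>\<^sub>M MX)" unfolding \<Omega>_def by simp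
        then show ?thesis using r1e by simp
      qed
    next
      fix R assume "R \<in> E"
      then obtain C1 C2 where R: "R = C1 \<times> C2" and C1: "C1 \<in> sets MW" and C2: "C2 \<in> sets MX"
        unfolding E_def by auto
      have Rs: "R \<in> sets (MW \<Otimes>\<^sub>M MX)" unfolding R using C1 C2 by simp
      have "(\<integral>\<omega>. indicator R (W \<omega>, X \<omega>) * iB \<omega> \<partial>M)
          = (\<integral>\<omega>. indicator C1 (W \<omega>) * indicator C2 (X \<omega>) * indicator B (A \<omega>) \<partial>M)"
        by (rule Bochner_Integration.integral_cong) (auto simp: R iB_def indicator_def)
      also have "\<dots> = (\<integral>\<omega>. indicator C1 (W \<omega>) * indicator C2 (X \<omega>) *
          real_cond_exp M (sigma_gen M (\<lambda>\<omega>. (U \<omega>, X \<omega>)) (MU \<Otimes>\<^sub>M MX)) (\<lambda>\<omega>. indicator B (A \<omega>)) \<omega> \<partial>M)"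
        by (rule ci_rect[OF prob mA mU mX mW mZ mY ci B C1 C2])
      also have "\<dots> = (\<integral>\<omega>. indicator R (W \<omega>, X \<omega>) * ce \<omega> \<partial>M)"
        by (rule Bochner_Integration.integral_cong) (auto simp: R ce_def iB_def F_def indicator_def)
      finally show "emeasure r1 R = emeasure r2 R" using r1e[OF Rs] r2e[OF Rs] by simp
    qed
  qed
  then have "ennreal (\<integral>\<omega>. indicator C (W \<omega>, X \<omega>) * iB \<omega> \<partial>M) = ennreal (\<integral>\<omega>. indicator C (W \<omega>, X \<omega>) * ce \<omega> \<partial>M)"
    using r1e[OF C] r2e[OF C] by simp
  moreover have "0 \<le> (\<integral>\<omega>. indicator C (W \<omega>, X \<omega>) * iB \<omega> \<partial>M)"
    by (rule integral_nonneg_AE) (auto simp: iB_def)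
  moreover have "0 \<le> (\<integral>\<omega>. indicator C (W \<omega>, X \<omega>) * ce \<omega> \<partial>M)"
    by (rule integral_nonneg_AE) (use cenn in \<open>auto\<close>)
  ultimately have "(\<integral>\<omega>. indicator C (W \<omega>, X \<omega>) * iB \<omega> \<partial>M) = (\<integral>\<omega>. indicator C (W \<omega>, X \<omega>) * ce \<omega> \<partial>M)"
    by simp
  then show ?thesis unfolding ce_def iB_def F_def .
qed

lemma key_lemma:
  fixes M :: "'o measure"
    and MU :: "'u measure" and MX :: "'x measure" and mu :: "'a measure"
    and MZ :: "'z measure" and MW :: "'w measure"
    and U :: "'o \<Rightarrow> 'u" and X :: "'o \<Rightarrow> 'x" and A :: "'o \<Rightarrow> 'a"
    and Z :: "'o \<Rightarrow> 'z" and W :: "'o \<Rightarrow> 'w" and Yv :: "'o \<Rightarrow> real"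
    and ppi :: "'a \<Rightarrow> 'x \<Rightarrow> real"
    and fU :: "'a \<Rightarrow> 'u \<times> 'x \<Rightarrow> real" and fW :: "'a \<Rightarrow> 'w \<times> 'x \<Rightarrow> real"
    and h :: "'w \<times> 'a \<times> 'x \<Rightarrow> real" and q1 :: "'z \<times> 'a \<times> 'x \<Rightarrow> real"
  assumes prob: "prob_space M"
    and sf: "sigma_finite_measure mu"
    and mU: "U \<in> measurable M MU" and mX: "X \<in> measurable M MX" and mA: "A \<in> measurable M mu"
    and mZ: "Z \<in> measurable M MZ" and mW: "W \<in> measurable M MW" and mY: "Yv \<in> borel_measurable M"
    and pi_meas: "(\<lambda>(a, x). ppi a x) \<in> borel_measurable (mu \<Otimes>\<^sub>M MX)"
    and dens_U: "cond_density M mu A (\<lambda>\<omega>. (U \<omega>, X \<omega>)) (MU \<Otimes>\<^sub>M MX) fU"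
    and dens_W: "cond_density M mu A (\<lambda>\<omega>. (W \<omega>, X \<omega>)) (MW \<Otimes>\<^sub>M MX) fW"
    and ci: "cond_indep M (\<lambda>\<omega>. (Z \<omega>, A \<omega>)) (MZ \<Otimes>\<^sub>M mu) (\<lambda>\<omega>. (Yv \<omega>, W \<omega>)) (borel \<Otimes>\<^sub>M MW)
               (\<lambda>\<omega>. (U \<omega>, X \<omega>)) (MU \<Otimes>\<^sub>M MX)"
    and NC_v: "\<forall>a\<in>space mu. \<forall>x\<in>space MX. \<forall>u\<in>space MU. ppi a x \<noteq> 0 \<longrightarrow> fU a (u, x) \<noteq> 0"
    and q1: "q1 \<in> action_bridges M ppi Z A X (MZ \<Otimes>\<^sub>M mu \<Otimes>\<^sub>M MX) (\<lambda>\<omega>. 1 / fW (A \<omega>) (W \<omega>, X \<omega>))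
                 (\<lambda>\<omega>. (W \<omega>, A \<omega>, X \<omega>)) (MW \<Otimes>\<^sub>M mu \<Otimes>\<^sub>M MX)"
    and hL: "L2rv M (\<lambda>\<omega>. (W \<omega>, A \<omega>, X \<omega>)) (MW \<Otimes>\<^sub>M mu \<Otimes>\<^sub>M MX) h"
  shows "integrable M (\<lambda>\<omega>. Top mu ppi h (W \<omega>) (X \<omega>)) \<and>
     (\<integral>\<omega>. ppi (A \<omega>) (X \<omega>) * q1 (Z \<omega>, A \<omega>, X \<omega>) * h (W \<omega>, A \<omega>, X \<omega>) \<partial>M)
       = (\<integral>\<omega>. Top mu ppi h (W \<omega>) (X \<omega>) \<partial>M)"
proof -
  interpret prob_space M by fact
  interpret mus: sigma_finite_measure mu by fact
  define WAX where "WAX = (\<lambda>\<omega>. (W \<omega>, A \<omega>, X \<omega>))"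
  define MWAX where "MWAX = MW \<Otimes>\<^sub>M mu \<Otimes>\<^sub>M MX"
  define F where "F = sigma_gen M WAX MWAX"
  have mWAX: "WAX \<in> measurable M MWAX" unfolding WAX_def MWAX_def using mW mA mX by measurable
  have mZAX: "(\<lambda>\<omega>. (Z \<omega>, A \<omega>, X \<omega>)) \<in> measurable M (MZ \<Otimes>\<^sub>M mu \<Otimes>\<^sub>M MX)" using mZ mA mX by measurable
  interpret S: sigma_finite_subalgebra M F unfolding F_def using sg_sfs prob mWAX by blast
  have fWm: "(\<lambda>(a, v). fW a v) \<in> borel_measurable (mu \<Otimes>\<^sub>M (MW \<Otimes>\<^sub>M MX))"
    using dens_W unfolding cond_density_def by auto
  define Rf where "Rf = (\<lambda>(w, a, x). ppi a x * (1 / fW a (w, x)))"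
  have Rfm: "Rf \<in> borel_measurable MWAX"
  proof -
    have p1: "(\<lambda>y. (\<lambda>(a, x). ppi a x) (fst (snd y), snd (snd y))) \<in> borel_measurable MWAX"
      unfolding MWAX_def by (rule measurable_compose[OF _ pi_meas]) measurable
    have p2: "(\<lambda>y. (\<lambda>(a, v). fW a v) (fst (snd y), (fst y, snd (snd y)))) \<in> borel_measurable MWAX"
      unfolding MWAX_def by (rule measurable_compose[OF _ fWm]) measurable
    have "(\<lambda>y. (\<lambda>(a, x). ppi a x) (fst (snd y), snd (snd y)) * (1 / (\<lambda>(a, v). fW a v) (fst (snd y), (fst y, snd (snd y))))) \<in> borel_measurable MWAX"
      using p1 p2 by measurable
    then show ?thesis unfolding Rf_def by (simp add: split_beta')
  qed
  define R where "R = (\<lambda>\<omega>. ppi (A \<omega>) (X \<omega>) * (1 / fW (A \<omega>) (W \<omega>, X \<omega>)))"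
  have R_eq: "R = (\<lambda>\<omega>. Rf (WAX \<omega>))" unfolding R_def Rf_def WAX_def by simp
  have RF: "R \<in> borel_measurable F" unfolding R_eq F_def by (rule sg_meas[OF mWAX Rfm])
  have RM: "R \<in> borel_measurable M" unfolding R_eq using measurable_compose[OF mWAX Rfm] by (simp add: o_def)
  define PQ where "PQ = (\<lambda>\<omega>. ppi (A \<omega>) (X \<omega>) * q1 (Z \<omega>, A \<omega>, X \<omega>))"
  define xi where "xi = (\<lambda>\<omega>. ppi (A \<omega>) (X \<omega>) * (q1 (Z \<omega>, A \<omega>, X \<omega>) - 1 / fW (A \<omega>) (W \<omega>, X \<omega>)))"
  have q1L: "L2rv M (\<lambda>\<omega>. (Z \<omega>, A \<omega>, X \<omega>)) (MZ \<Otimes>\<^sub>M mu \<Otimes>\<^sub>M MX) (\<lambda>(z, a, x). ppi a x * q1 (z, a, x))"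
    and xiI: "integrable M xi" and xi0: "AE \<omega> in M. real_cond_exp M F xi \<omega> = 0"
    using q1 unfolding action_bridges_def cexp_zero_def xi_def F_def WAX_def MWAX_def by auto
  have PQm: "PQ \<in> borel_measurable M" "integrable M (\<lambda>\<omega>. (PQ \<omega>)\<^sup>2)"
    unfolding PQ_def by (rule L2rv_pi[OF q1L mZAX])+
  have PQI: "integrable M PQ" by (rule L2_int[OF prob PQm])
  have PQ_eq: "PQ = (\<lambda>\<omega>. xi \<omega> + R \<omega>)" unfolding PQ_def xi_def R_def by (auto simp: algebra_simps)
  have RI: "integrable M R"
  proof -
    have "integrable M (\<lambda>\<omega>. PQ \<omega> - xi \<omega>)" using PQI xiI by simp
    moreover have "(\<lambda>\<omega>. PQ \<omega> - xi \<omega>) = R" unfolding PQ_eq by simp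
    ultimately show ?thesis by simp
  qed
  have cePQ: "AE \<omega> in M. real_cond_exp M F PQ \<omega> = R \<omega>"
  proof -
    have a1: "AE \<omega> in M. real_cond_exp M F (\<lambda>\<omega>. xi \<omega> + R \<omega>) \<omega> = real_cond_exp M F xi \<omega> + real_cond_exp M F R \<omega>"
      by (rule S.real_cond_exp_add[OF xiI RI])
    have a2: "AE \<omega> in M. real_cond_exp M F R \<omega> = R \<omega>" by (rule S.real_cond_exp_F_meas[OF RI RF])
    show ?thesis unfolding PQ_eq using a1 a2 xi0 by eventually_elim simp
  qed
  have hm: "(\<lambda>\<omega>. h (WAX \<omega>)) \<in> borel_measurable M" "integrable M (\<lambda>\<omega>. (h (WAX \<omega>))\<^sup>2)"
    using L2rv_comp[OF hL[folded WAX_def MWAX_def] mWAX] by auto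
  have hmeas: "h \<in> borel_measurable MWAX" using hL unfolding L2rv_def MWAX_def by auto
  have hF: "(\<lambda>\<omega>. h (WAX \<omega>)) \<in> borel_measurable F" unfolding F_def by (rule sg_meas[OF mWAX hmeas])
  have ihPQ: "integrable M (\<lambda>\<omega>. h (WAX \<omega>) * PQ \<omega>)" by (rule L2_prod[OF hm(1) PQm(1) hm(2) PQm(2)])
  note K = S.real_cond_exp_intg[OF ihPQ hF PQm(1)]
  have hRm: "(\<lambda>\<omega>. h (WAX \<omega>) * R \<omega>) \<in> borel_measurable M" using hm(1) RM by measurable
  have ihR: "integrable M (\<lambda>\<omega>. h (WAX \<omega>) * R \<omega>)"
  proof (rule integrable_cong_AE_imp[OF K(1) hRm])
    show "AE \<omega> in M. h (WAX \<omega>) * real_cond_exp M F PQ \<omega> = h (WAX \<omega>) * R \<omega>"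
      using cePQ by eventually_elim simp
  qed
  have e1: "(\<integral>\<omega>. h (WAX \<omega>) * PQ \<omega> \<partial>M) = (\<integral>\<omega>. h (WAX \<omega>) * R \<omega> \<partial>M)"
  proof -
    have "(\<integral>\<omega>. h (WAX \<omega>) * real_cond_exp M F PQ \<omega> \<partial>M) = (\<integral>\<omega>. h (WAX \<omega>) * R \<omega> \<partial>M)"
      by (rule integral_cong_AE) (use cePQ hm(1) RM in auto)
    then show ?thesis using K(2) by simp
  qed
  define V where "V = (\<lambda>\<omega>. (W \<omega>, X \<omega>))"
  have mV: "V \<in> measurable M (MW \<Otimes>\<^sub>M MX)" unfolding V_def using mW mX by measurable
  define G where "G = (\<lambda>v a. h (fst v, a, snd v) * Rf (fst v, a, snd v))"
  have Gm: "(\<lambda>(v, a). G v a) \<in> borel_measurable ((MW \<Otimes>\<^sub>M MX) \<Otimes>\<^sub>M mu)"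
  proof -
    have t: "(\<lambda>y. (fst (fst y), snd y, snd (fst y))) \<in> measurable ((MW \<Otimes>\<^sub>M MX) \<Otimes>\<^sub>M mu) MWAX"
      unfolding MWAX_def by measurable
    have "(\<lambda>y. h (fst (fst y), snd y, snd (fst y)) * Rf (fst (fst y), snd y, snd (fst y))) \<in> borel_measurable ((MW \<Otimes>\<^sub>M MX) \<Otimes>\<^sub>M mu)"
      using measurable_compose[OF t hmeas] measurable_compose[OF t Rfm] by measurable
    then show ?thesis unfolding G_def by (simp add: split_beta')
  qed
  have GVA: "(\<lambda>\<omega>. G (V \<omega>) (A \<omega>)) = (\<lambda>\<omega>. h (WAX \<omega>) * R \<omega>)"
    unfolding G_def V_def WAX_def R_eq by simp
  have Gi: "integrable M (\<lambda>\<omega>. G (V \<omega>) (A \<omega>))" unfolding GVA by (rule ihR)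
  note D = dens_int[OF prob sf mA mV dens_W[folded V_def] Gm Gi]
  define UX where "UX = (\<lambda>\<omega>. (U \<omega>, X \<omega>))"
  have mUX: "UX \<in> measurable M (MU \<Otimes>\<^sub>M MX)" unfolding UX_def using mU mX by measurable
  have EQ: "(\<integral>\<omega>. indicator C (V \<omega>) * indicator B (A \<omega>) \<partial>M)
       = (\<integral>\<omega>. indicator C (V \<omega>) * real_cond_exp M (sigma_gen M UX (MU \<Otimes>\<^sub>M MX)) (\<lambda>\<omega>. indicator B (A \<omega>)) \<omega> \<partial>M)"
    if "B \<in> sets mu" "C \<in> sets (MW \<Otimes>\<^sub>M MX)" for B C
    unfolding V_def UX_def by (rule ci_eq[OF prob mA mU mX mW mZ mY ci that])
  have Pm: "{x \<in> space ((MW \<Otimes>\<^sub>M MX) \<Otimes>\<^sub>M mu). ppi (snd x) (snd (fst x)) \<noteq> 0} \<in> sets ((MW \<Otimes>\<^sub>M MX) \<Otimes>\<^sub>M mu)"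
  proof -
    have "(\<lambda>y. (\<lambda>(a, x). ppi a x) (snd y, snd (fst y))) \<in> borel_measurable ((MW \<Otimes>\<^sub>M MX) \<Otimes>\<^sub>M mu)"
      by (rule measurable_compose[OF _ pi_meas]) measurable
    then have "(\<lambda>y. ppi (snd y) (snd (fst y))) \<in> borel_measurable ((MW \<Otimes>\<^sub>M MX) \<Otimes>\<^sub>M mu)" by simp
    then show ?thesis by measurable
  qed
  have pos: "\<forall>\<omega>\<in>space M. \<forall>a\<in>space mu. ppi a (snd (V \<omega>)) \<noteq> 0 \<longrightarrow> fU a (UX \<omega>) \<noteq> 0"
  proof (intro ballI impI)
    fix \<omega> a assume "\<omega> \<in> space M" "a \<in> space mu" "ppi a (snd (V \<omega>)) \<noteq> 0"
    moreover have "X \<omega> \<in> space MX" "U \<omega> \<in> space MU" using \<open>\<omega> \<in> space M\<close> mX mU by (auto simp: measurable_def)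
    ultimately show "fU a (UX \<omega>) \<noteq> 0" using NC_v unfolding V_def UX_def by auto
  qed
  have PA: "AE \<omega> in M. AE a in mu. ppi a (snd (V \<omega>)) \<noteq> 0 \<longrightarrow> fW a (V \<omega>) \<noteq> 0"
    by (rule pos_lemma[where P="\<lambda>v a. ppi a (snd v) \<noteq> 0", OF prob sf mA mUX mV dens_U[folded UX_def] dens_W[folded V_def] EQ Pm pos])
  define Tf where "Tf = (\<lambda>\<omega>. Top mu ppi h (W \<omega>) (X \<omega>))"
  have Tfm: "Tf \<in> borel_measurable M"
  proof -
    have "(\<lambda>(\<omega>, a). h (W \<omega>, a, X \<omega>) * ppi a (X \<omega>)) \<in> borel_measurable (M \<Otimes>\<^sub>M mu)"
    proof -
      have t: "(\<lambda>y. (W (fst y), snd y, X (fst y))) \<in> measurable (M \<Otimes>\<^sub>M mu) MWAX"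
        unfolding MWAX_def using mW mX by measurable
      have t2: "(\<lambda>y. (\<lambda>(a, x). ppi a x) (snd y, X (fst y))) \<in> borel_measurable (M \<Otimes>\<^sub>M mu)"
        by (rule measurable_compose[OF _ pi_meas]) (use mX in measurable)
      have "(\<lambda>y. h (W (fst y), snd y, X (fst y)) * (\<lambda>(a, x). ppi a x) (snd y, X (fst y))) \<in> borel_measurable (M \<Otimes>\<^sub>M mu)"
        using measurable_compose[OF t hmeas] t2 by measurable
      then show ?thesis by (simp add: split_beta')
    qed
    then have "(\<lambda>\<omega>. \<integral>a. h (W \<omega>, a, X \<omega>) * ppi a (X \<omega>) \<partial>mu) \<in> borel_measurable M"
      by (rule mus.borel_measurable_lebesgue_integral)
    then show ?thesis unfolding Tf_def Top_def .
  qed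
  have inner: "AE \<omega> in M. (\<integral>a. fW a (V \<omega>) * G (V \<omega>) a \<partial>mu) = Tf \<omega>"
    using PA AE_space
  proof eventually_elim
    case (elim \<omega>)
    have Ws: "W \<omega> \<in> space MW" and Xs: "X \<omega> \<in> space MX" using elim(2) mW mX by (auto simp: measurable_def)
    have ta: "(\<lambda>a. (W \<omega>, a, X \<omega>)) \<in> measurable mu MWAX" unfolding MWAX_def using Ws Xs by measurable
    have tb: "(\<lambda>a. (a, (W \<omega>, X \<omega>))) \<in> measurable mu (mu \<Otimes>\<^sub>M (MW \<Otimes>\<^sub>M MX))" using Ws Xs by measurable
    have tc: "(\<lambda>a. (a, X \<omega>)) \<in> measurable mu (mu \<Otimes>\<^sub>M MX)" using Xs by measurable
    have m1: "(\<lambda>a. fW a (V \<omega>) * G (V \<omega>) a) \<in> borel_measurable mu"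
    proof -
      have "(\<lambda>a. (\<lambda>(a, v). fW a v) (a, (W \<omega>, X \<omega>)) * (h (W \<omega>, a, X \<omega>) * Rf (W \<omega>, a, X \<omega>))) \<in> borel_measurable mu"
        using measurable_compose[OF tb fWm] measurable_compose[OF ta hmeas] measurable_compose[OF ta Rfm] by measurable
      then show ?thesis unfolding G_def V_def by simp
    qed
    have m2: "(\<lambda>a. h (W \<omega>, a, X \<omega>) * ppi a (X \<omega>)) \<in> borel_measurable mu"
    proof -
      have "(\<lambda>a. h (W \<omega>, a, X \<omega>) * (\<lambda>(a, x). ppi a x) (a, X \<omega>)) \<in> borel_measurable mu"
        using measurable_compose[OF ta hmeas] measurable_compose[OF tc pi_meas] by measurable
      then show ?thesis by simp
    qed
    have "(\<integral>a. fW a (V \<omega>) * G (V \<omega>) a \<partial>mu) = (\<integral>a. h (W \<omega>, a, X \<omega>) * ppi a (X \<omega>) \<partial>mu)"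
    proof (rule integral_cong_AE[OF m1 m2])
      show "AE a in mu. fW a (V \<omega>) * G (V \<omega>) a = h (W \<omega>, a, X \<omega>) * ppi a (X \<omega>)"
        using elim(1)
      proof eventually_elim
        case (elim a)
        show ?case
        proof (cases "ppi a (X \<omega>) = 0")
          case True then show ?thesis unfolding G_def V_def Rf_def by simp
        next
          case False
          then have "fW a (W \<omega>, X \<omega>) \<noteq> 0" using elim unfolding V_def by simp
          then show ?thesis unfolding G_def V_def Rf_def by (simp add: field_simps)
        qed
      qed
    qed
    then show ?case unfolding Tf_def Top_def .
  qed
  have TfI: "integrable M Tf"
    by (rule integrable_cong_AE_imp[OF D(2) Tfm inner])
  have "(\<integral>\<omega>. Tf \<omega> \<partial>M) = (\<integral>\<omega>. \<integral>a. fW a (V \<omega>) * G (V \<omega>) a \<partial>mu \<partial>M)"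
    by (rule integral_cong_AE[OF Tfm]) (use inner D(2) in auto)
  also have "\<dots> = (\<integral>\<omega>. G (V \<omega>) (A \<omega>) \<partial>M)" using D(3) by simp
  also have "\<dots> = (\<integral>\<omega>. h (WAX \<omega>) * PQ \<omega> \<partial>M)" unfolding GVA e1 ..
  also have "\<dots> = (\<integral>\<omega>. ppi (A \<omega>) (X \<omega>) * q1 (Z \<omega>, A \<omega>, X \<omega>) * h (W \<omega>, A \<omega>, X \<omega>) \<partial>M)"
    unfolding PQ_def WAX_def by (simp add: ac_simps)
  finally show ?thesis using TfI unfolding Tf_def by simp
qed

theorem mainTheorem6:
  fixes M :: "'o measure"
    and MU :: "'u measure" and MX :: "'x measure" and mu :: "'a measure"
    and MZ :: "'z measure" and MW :: "'w measure"
    and U :: "'o \<Rightarrow> 'u" and X :: "'o \<Rightarrow> 'x" and A :: "'o \<Rightarrow> 'a"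
    and Z :: "'o \<Rightarrow> 'z" and W :: "'o \<Rightarrow> 'w" and Y :: "'o \<Rightarrow> real"
    and Ypo :: "'a \<Rightarrow> 'z \<Rightarrow> 'o \<Rightarrow> real" and Ya :: "'a \<Rightarrow> 'o \<Rightarrow> real"
    and Wpo :: "'a \<Rightarrow> 'z \<Rightarrow> 'o \<Rightarrow> 'w"
    and ppi :: "'a \<Rightarrow> 'x \<Rightarrow> real"
    and fU :: "'a \<Rightarrow> 'u \<times> 'x \<Rightarrow> real" and fW :: "'a \<Rightarrow> 'w \<times> 'x \<Rightarrow> real"
    and H :: "('w \<times> 'a \<times> 'x \<Rightarrow> real) set" and H' :: "('w \<times> 'a \<times> 'x \<Rightarrow> real) set"
    and Q :: "('z \<times> 'a \<times> 'x \<Rightarrow> real) set" and Q' :: "('z \<times> 'a \<times> 'x \<Rightarrow> real) set"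
  defines "WAX \<equiv> (\<lambda>\<omega>. (W \<omega>, A \<omega>, X \<omega>))" and "MWAX \<equiv> MW \<Otimes>\<^sub>M mu \<Otimes>\<^sub>M MX"
      and "ZAX \<equiv> (\<lambda>\<omega>. (Z \<omega>, A \<omega>, X \<omega>))" and "MZAX \<equiv> MZ \<Otimes>\<^sub>M mu \<Otimes>\<^sub>M MX"
      and "AUX \<equiv> (\<lambda>\<omega>. (A \<omega>, U \<omega>, X \<omega>))" and "MAUX \<equiv> mu \<Otimes>\<^sub>M MU \<Otimes>\<^sub>M MX"
  assumes prob: "prob_space M"
    and sf: "sigma_finite_measure mu"
    and meas: "U \<in> measurable M MU" "X \<in> measurable M MX" "A \<in> measurable M mu"
              "Z \<in> measurable M MZ" "W \<in> measurable M MW" "Y \<in> borel_measurable M"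
    and pi_meas: "(\<lambda>(a, x). ppi a x) \<in> borel_measurable (mu \<Otimes>\<^sub>M MX)"
    and dens_U: "cond_density M mu A (\<lambda>\<omega>. (U \<omega>, X \<omega>)) (MU \<Otimes>\<^sub>M MX) fU"
    and dens_W: "cond_density M mu A (\<lambda>\<omega>. (W \<omega>, X \<omega>)) (MW \<Otimes>\<^sub>M MX) fW"
    and Y_L2: "integrable M (\<lambda>\<omega>. (Y \<omega>)\<^sup>2)"
    \<comment> \<open>Assumption (NC)\<close>
    and NC_i: "\<forall>\<omega>\<in>space M. Y \<omega> = Ypo (A \<omega>) (Z \<omega>) \<omega> \<and> W \<omega> = Wpo (A \<omega>) (Z \<omega>) \<omega>"
    and NC_ii: "\<forall>a\<in>space mu. \<forall>z\<in>space MZ. \<forall>\<omega>\<in>space M. Ypo a z \<omega> = Ya a \<omega>"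
    and NC_iii: "\<forall>a\<in>space mu. \<forall>z\<in>space MZ. \<forall>\<omega>\<in>space M. Wpo a z \<omega> = W \<omega>"
    and NC_iv: "\<forall>a\<in>space mu. Ya a \<in> borel_measurable M \<and>
                  cond_indep M (\<lambda>\<omega>. (Z \<omega>, A \<omega>)) (MZ \<Otimes>\<^sub>M mu)
                    (\<lambda>\<omega>. (Ya a \<omega>, W \<omega>)) (borel \<Otimes>\<^sub>M MW) (\<lambda>\<omega>. (U \<omega>, X \<omega>)) (MU \<Otimes>\<^sub>M MX)"
    and NC_v: "\<forall>a\<in>space mu. \<forall>x\<in>space MX. \<forall>u\<in>space MU. ppi a x \<noteq> 0 \<longrightarrow> fU a (u, x) \<noteq> 0"
    \<comment> \<open>Assumption (B)\<close>
    and B_H: "outcome_bridges M WAX MWAX Y AUX MAUX \<noteq> {}"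
    and B_Q: "action_bridges M ppi Z A X MZAX (\<lambda>\<omega>. 1 / fU (A \<omega>) (U \<omega>, X \<omega>)) AUX MAUX \<noteq> {}"
    \<comment> \<open>function classes\<close>
    and H_L2: "\<forall>h\<in>H. L2rv M WAX MWAX h"
    and Q_L2: "\<forall>q\<in>Q. L2rv M ZAX MZAX (\<lambda>(z, a, x). ppi a x * q (z, a, x))"
    and H'_L2: "\<forall>h\<in>H'. L2rv M WAX MWAX h"
    and Q'_L2: "\<forall>q\<in>Q'. L2rv M ZAX MZAX q"
    \<comment> \<open>realizability\<close>
    and real_H: "outcome_bridges M WAX MWAX Y ZAX MZAX \<inter> H \<noteq> {}"
    and real_Q: "action_bridges M ppi Z A X MZAX (\<lambda>\<omega>. 1 / fW (A \<omega>) (W \<omega>, X \<omega>)) WAX MWAX \<inter> Q \<noteq> {}"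
    \<comment> \<open>closedness: P_z (H - H0obs) \<subseteq> Q' and ppi P_w (Q - Q0obs) \<subseteq> H'\<close>
    and closed_Q': "\<forall>h\<in>H. \<forall>h0\<in>outcome_bridges M WAX MWAX Y ZAX MZAX. \<exists>q\<in>Q'.
                     cexp_version M ZAX MZAX (\<lambda>\<omega>. h (WAX \<omega>) - h0 (WAX \<omega>)) q"
    and closed_H': "\<forall>q\<in>Q. \<forall>q0\<in>action_bridges M ppi Z A X MZAX (\<lambda>\<omega>. 1 / fW (A \<omega>) (W \<omega>, X \<omega>)) WAX MWAX.
                     \<exists>h\<in>H'. cexp_version M WAX MWAX
                        (\<lambda>\<omega>. ppi (A \<omega>) (X \<omega>) * q (ZAX \<omega>) - ppi (A \<omega>) (X \<omega>) * q0 (ZAX \<omega>)) h"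
  shows "outcome_bridges M WAX MWAX Y ZAX MZAX \<inter> H
           = argmin_on H (\<lambda>h. SUP q\<in>Q'. ereal ((\<integral>\<omega>. q (ZAX \<omega>) * (h (WAX \<omega>) - Y \<omega>) \<partial>M)\<^sup>2))
         \<and> action_bridges M ppi Z A X MZAX (\<lambda>\<omega>. 1 / fW (A \<omega>) (W \<omega>, X \<omega>)) WAX MWAX \<inter> Q
           = argmin_on Q (\<lambda>q. SUP h\<in>H'. ereal ((\<integral>\<omega>. ppi (A \<omega>) (X \<omega>) * q (ZAX \<omega>) * h (WAX \<omega>)
                                                  - Top mu ppi h (W \<omega>) (X \<omega>) \<partial>M)\<^sup>2))"
  proof -
  have mWAX: "WAX \<in> measurable M MWAX" unfolding WAX_def MWAX_def using meas by measurable
  have mZAX: "ZAX \<in> measurable M MZAX" unfolding ZAX_def MZAX_def using meas by measurable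
  have c1: "outcome_bridges M WAX MWAX Y ZAX MZAX \<inter> H
           = argmin_on H (\<lambda>h. SUP q\<in>Q'. ereal ((\<integral>\<omega>. q (ZAX \<omega>) * (h (WAX \<omega>) - Y \<omega>) \<partial>M)\<^sup>2))"
    by (rule part_outcome[OF prob mWAX mZAX meas(6) Y_L2 H_L2 Q'_L2 real_H closed_Q'])
  interpret prob_space M by (rule prob)
  obtain \<omega>0 where "\<omega>0 \<in> space M" using not_empty by auto
  then have a0: "A \<omega>0 \<in> space mu" using meas(3) by (auto simp: measurable_def)
  define a0 where "a0 = A \<omega>0"
  have Ya0: "Ya a0 \<in> borel_measurable M"
    and ci: "cond_indep M (\<lambda>\<omega>. (Z \<omega>, A \<omega>)) (MZ \<Otimes>\<^sub>M mu)
                    (\<lambda>\<omega>. (Ya a0 \<omega>, W \<omega>)) (borel \<Otimes>\<^sub>M MW) (\<lambda>\<omega>. (U \<omega>, X \<omega>)) (MU \<Otimes>\<^sub>M MX)"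
    using NC_iv a0 unfolding a0_def by auto
  have KEY: "\<forall>q1\<in>action_bridges M ppi Z A X MZAX (\<lambda>\<omega>. 1 / fW (A \<omega>) (W \<omega>, X \<omega>)) WAX MWAX. \<forall>h\<in>H'.
                 integrable M ((\<lambda>h \<omega>. Top mu ppi h (W \<omega>) (X \<omega>)) h) \<and>
                 (\<integral>\<omega>. ppi (A \<omega>) (X \<omega>) * q1 (Z \<omega>, A \<omega>, X \<omega>) * h (WAX \<omega>) \<partial>M)
                   = (\<integral>\<omega>. (\<lambda>h \<omega>. Top mu ppi h (W \<omega>) (X \<omega>)) h \<omega> \<partial>M)"
  proof (intro ballI)
    fix q1 h
    assume q1: "q1 \<in> action_bridges M ppi Z A X MZAX (\<lambda>\<omega>. 1 / fW (A \<omega>) (W \<omega>, X \<omega>)) WAX MWAX"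
      and h: "h \<in> H'"
    have hL: "L2rv M (\<lambda>\<omega>. (W \<omega>, A \<omega>, X \<omega>)) (MW \<Otimes>\<^sub>M mu \<Otimes>\<^sub>M MX) h"
      using H'_L2 h unfolding WAX_def MWAX_def by auto
    have q1': "q1 \<in> action_bridges M ppi Z A X (MZ \<Otimes>\<^sub>M mu \<Otimes>\<^sub>M MX) (\<lambda>\<omega>. 1 / fW (A \<omega>) (W \<omega>, X \<omega>))
                 (\<lambda>\<omega>. (W \<omega>, A \<omega>, X \<omega>)) (MW \<Otimes>\<^sub>M mu \<Otimes>\<^sub>M MX)"
      using q1 unfolding WAX_def MWAX_def MZAX_def .
    show "integrable M ((\<lambda>h \<omega>. Top mu ppi h (W \<omega>) (X \<omega>)) h) \<and>
                 (\<integral>\<omega>. ppi (A \<omega>) (X \<omega>) * q1 (Z \<omega>, A \<omega>, X \<omega>) * h (WAX \<omega>) \<partial>M)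
                   = (\<integral>\<omega>. (\<lambda>h \<omega>. Top mu ppi h (W \<omega>) (X \<omega>)) h \<omega> \<partial>M)"
      using key_lemma[OF prob sf meas(1) meas(2) meas(3) meas(4) meas(5) Ya0 pi_meas dens_U dens_W ci NC_v q1' hL]
      unfolding WAX_def by simp
  qed
  have mZAX': "(\<lambda>\<omega>. (Z \<omega>, A \<omega>, X \<omega>)) \<in> measurable M MZAX" using mZAX unfolding ZAX_def .
  have Q_L2': "\<forall>q\<in>Q. L2rv M (\<lambda>\<omega>. (Z \<omega>, A \<omega>, X \<omega>)) MZAX (\<lambda>(z, a, x). ppi a x * q (z, a, x))"
    using Q_L2 unfolding ZAX_def .
  have closed_H'': "\<forall>q\<in>Q. \<forall>q0\<in>action_bridges M ppi Z A X MZAX (\<lambda>\<omega>. 1 / fW (A \<omega>) (W \<omega>, X \<omega>)) WAX MWAX.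
                     \<exists>h\<in>H'. cexp_version M WAX MWAX
                        (\<lambda>\<omega>. ppi (A \<omega>) (X \<omega>) * q (Z \<omega>, A \<omega>, X \<omega>) - ppi (A \<omega>) (X \<omega>) * q0 (Z \<omega>, A \<omega>, X \<omega>)) h"
    using closed_H' unfolding ZAX_def .
  have c2: "action_bridges M ppi Z A X MZAX (\<lambda>\<omega>. 1 / fW (A \<omega>) (W \<omega>, X \<omega>)) WAX MWAX \<inter> Q
           = argmin_on Q (\<lambda>q. SUP h\<in>H'. ereal ((\<integral>\<omega>. ppi (A \<omega>) (X \<omega>) * q (Z \<omega>, A \<omega>, X \<omega>) * h (WAX \<omega>)
                                                  - (\<lambda>h \<omega>. Top mu ppi h (W \<omega>) (X \<omega>)) h \<omega> \<partial>M)\<^sup>2))"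
    by (rule part_action[OF prob mWAX mZAX' Q_L2' H'_L2 real_Q closed_H'' KEY])
  show ?thesis using c1 c2 unfolding ZAX_def by simp
qed

end
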